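(* Let $\mathcal{L}$ be a Lie algebra over $\mathbf{k}$, $k\in\mathbf{k}$ nonzero, and let $((\mathcal{U},q),i)$ be its enveloping$^{6\text{-th}}$ algebra with multiplication $m$ and unit $u:\mathbf{k}\to\mathcal{U}$. Let $\Delta$, $\varepsilon$ be the algebra homomorphisms determined by $\Delta(q)=q\otimes q$, $\Delta(x)=(x+kqx-xq)\otimes1+1\otimes(x+kqx-xq)+(1-k)qx\otimes q+(1-k)q\otimes qx$, $\varepsilon(q)=1$, $\varepsilon(x)=0$ ($x\in i(\mathcal{L})$), let $\sigma(a)=a+qa-aq$, and let $S$ be the unique invariant anti-homomorphism with $S(q)=1-q$ and $S(x)=-\frac1kx-kqx+\frac1kxq$ for $x\in i(\mathcal{L})$. Then $\mathcal{U}$ with $(m,u,\Delta,\varepsilon,\sigma)$ is a bialgebra with $\sigma$-counit, and it is a Hopf-like algebra with antipode-like $S$, i.e. $m(S\otimes\mathrm{id})\Delta=u\varepsilon S=m(\mathrm{id}\otimes S)\Delta$.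
   Context: Invariant algebra $(A,q)=\{x\in A: qxq=qx\}$ for an idempotent $q$ of an associative unital algebra $A$; $\mathrm{Lie}(A,q)$ uses the bracket $[x,y]_{6,k}=xy-yx-xyq+yxq+kxqy-kyqx$. The enveloping$^{6\text{-th}}$ algebra $((\mathcal{U},q),i)$ is an invariant algebra with Lie homomorphism $i:\mathcal{L}\to\mathrm{Lie}(\mathcal{U},q)$ through which every Lie homomorphism into $\mathrm{Lie}(A,q_A)$ of an invariant algebra factors uniquely via a unital multiplicative map preserving idempotents. An invariant anti-homomorphism is a linear $S$ with $S(ab)=S(b)S(a)$, $S(1)=1$, $S(q)=1-q$. A bialgebra with $\sigma$-counit is a vector space $H$ with linear maps $m:H\otimes H\to H$, $u:\mathbf{k}\to H$, $\Delta:H\to H\otimes H$, $\varepsilon:H\to\mathbf{k}$, $\sigma:H\to H$ such that $(H,m,u)$ is an associative unital algebra, $\Delta$ is coassociative ($(\mathrm{id}\otimes\Delta)\Delta=(\Delta\otimes\mathrm{id})\Delta$), $(\varepsilon\otimes\mathrm{id})\Delta(h)=1\otimes\sigma(h)$ and $(\mathrm{id}\otimes\varepsilon)\Delta(h)=\sigma(h)\otimes1$ for all $h$, and $\Delta$ and $\varepsilon$ are unital algebra homomorphisms ($H\otimes H$ with the componentwise product). It is Hopf-like if there is a linear $S:H\to H$ (antipode-like) with $m(S\otimes\mathrm{id})\Delta=u\varepsilon S=m(\mathrm{id}\otimes S)\Delta$. *)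

theory Defs
  imports Complex_Main "HOL-Library.Function_Algebras"
begin

definition lie_algebra ::
  "('k::field \<Rightarrow> 'l::ab_group_add \<Rightarrow> 'l) \<Rightarrow> ('l \<Rightarrow> 'l \<Rightarrow> 'l) \<Rightarrow> bool" where
  "lie_algebra sL br \<longleftrightarrow>
     vector_space sL \<and>
     (\<forall>x y z. br (x + y) z = br x z + br y z) \<and>
     (\<forall>x y z. br x (y + z) = br x y + br x z) \<and>
     (\<forall>c x y. br (sL c x) y = sL c (br x y)) \<and>
     (\<forall>c x y. br x (sL c y) = sL c (br x y)) \<and>
     (\<forall>x. br x x = 0) \<and>
     (\<forall>x y z. br x (br y z) + br y (br z x) + br z (br x y) = 0)"

section \<open>Associative unital algebras, invariant algebras (whole type as carrier)\<close>

definition k_algebra :: "('k::field \<Rightarrow> 'u::ring_1 \<Rightarrow> 'u) \<Rightarrow> bool" where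
  "k_algebra sU \<longleftrightarrow> vector_space sU \<and>
     (\<forall>c x y. sU c (x * y) = sU c x * y \<and> sU c (x * y) = x * sU c y)"

text \<open>An invariant algebra (A,q): q idempotent and every element x satisfies qxq = qx,
i.e. A coincides with (A,q) = {x. qxq = qx}.\<close>

definition invariant_algebra :: "('k::field \<Rightarrow> 'u::ring_1 \<Rightarrow> 'u) \<Rightarrow> 'u \<Rightarrow> bool" where
  "invariant_algebra sU q \<longleftrightarrow> k_algebra sU \<and> q * q = q \<and> (\<forall>x. q * x * q = q * x)"

definition bracket6 :: "('k::field \<Rightarrow> 'u::ring_1 \<Rightarrow> 'u) \<Rightarrow> 'k \<Rightarrow> 'u \<Rightarrow> 'u \<Rightarrow> 'u \<Rightarrow> 'u" where
  "bracket6 sU k q x y =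
     x * y - y * x - x * y * q + y * x * q + sU k (x * q * y) - sU k (y * q * x)"

section \<open>General invariant algebras on a carrier set (targets of the universal property)\<close>

record ('k, 'a) ialg =
  icar :: "'a set"
  iadd :: "'a \<Rightarrow> 'a \<Rightarrow> 'a"
  izero :: "'a"
  ineg :: "'a \<Rightarrow> 'a"
  ism :: "'k \<Rightarrow> 'a \<Rightarrow> 'a"
  imul :: "'a \<Rightarrow> 'a \<Rightarrow> 'a"
  ione :: "'a"
  iq :: "'a"

definition is_invariant_ialg :: "('k::field, 'a) ialg \<Rightarrow> bool" where
  "is_invariant_ialg A \<longleftrightarrow>
     izero A \<in> icar A \<and> ione A \<in> icar A \<and> iq A \<in> icar A \<and>
     (\<forall>x\<in>icar A. \<forall>y\<in>icar A. iadd A x y \<in> icar A \<and> imul A x y \<in> icar A) \<and>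
     (\<forall>x\<in>icar A. ineg A x \<in> icar A \<and> (\<forall>c. ism A c x \<in> icar A)) \<and>
     \<comment> \<open>abelian group\<close>
     (\<forall>x\<in>icar A. \<forall>y\<in>icar A. \<forall>z\<in>icar A. iadd A (iadd A x y) z = iadd A x (iadd A y z)) \<and>
     (\<forall>x\<in>icar A. \<forall>y\<in>icar A. iadd A x y = iadd A y x) \<and>
     (\<forall>x\<in>icar A. iadd A (izero A) x = x \<and> iadd A (ineg A x) x = izero A) \<and>
     \<comment> \<open>vector space over 'k\<close>
     (\<forall>c. \<forall>x\<in>icar A. \<forall>y\<in>icar A. ism A c (iadd A x y) = iadd A (ism A c x) (ism A c y)) \<and>
     (\<forall>c d. \<forall>x\<in>icar A. ism A (c + d) x = iadd A (ism A c x) (ism A d x)) \<and>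
     (\<forall>c d. \<forall>x\<in>icar A. ism A (c * d) x = ism A c (ism A d x)) \<and>
     (\<forall>x\<in>icar A. ism A 1 x = x) \<and>
     \<comment> \<open>associative unital algebra\<close>
     (\<forall>x\<in>icar A. \<forall>y\<in>icar A. \<forall>z\<in>icar A. imul A (imul A x y) z = imul A x (imul A y z)) \<and>
     (\<forall>x\<in>icar A. imul A (ione A) x = x \<and> imul A x (ione A) = x) \<and>
     (\<forall>x\<in>icar A. \<forall>y\<in>icar A. \<forall>z\<in>icar A.
        imul A x (iadd A y z) = iadd A (imul A x y) (imul A x z) \<and>
        imul A (iadd A x y) z = iadd A (imul A x z) (imul A y z)) \<and>
     (\<forall>c. \<forall>x\<in>icar A. \<forall>y\<in>icar A.
        ism A c (imul A x y) = imul A (ism A c x) y \<and> ism A c (imul A x y) = imul A x (ism A c y)) \<and>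
     \<comment> \<open>idempotent q and invariance\<close>
     imul A (iq A) (iq A) = iq A \<and>
     (\<forall>x\<in>icar A. imul A (imul A (iq A) x) (iq A) = imul A (iq A) x)"

definition ibracket6 :: "('k::field, 'a) ialg \<Rightarrow> 'k \<Rightarrow> 'a \<Rightarrow> 'a \<Rightarrow> 'a" where
  "ibracket6 A k x y =
     (let sub = (\<lambda>a b. iadd A a (ineg A b)); m = imul A; q = iq A in
      sub (iadd A (iadd A (sub (sub (m x y) (m y x)) (m (m x y) q)) (m (m y x) q))
                  (ism A k (m (m x q) y)))
          (ism A k (m (m y q) x)))"

definition lie_hom_ialg ::
  "('k::field \<Rightarrow> 'l::ab_group_add \<Rightarrow> 'l) \<Rightarrow> ('l \<Rightarrow> 'l \<Rightarrow> 'l) \<Rightarrow> 'k \<Rightarrow> ('k, 'a) ialg \<Rightarrow> ('l \<Rightarrow> 'a) \<Rightarrow> bool" where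
  "lie_hom_ialg sL br k A f \<longleftrightarrow>
     (\<forall>x. f x \<in> icar A) \<and>
     (\<forall>x y. f (x + y) = iadd A (f x) (f y)) \<and>
     (\<forall>c x. f (sL c x) = ism A c (f x)) \<and>
     (\<forall>x y. f (br x y) = ibracket6 A k (f x) (f y))"

definition inv_alg_hom_to ::
  "('k::field \<Rightarrow> 'u::ring_1 \<Rightarrow> 'u) \<Rightarrow> 'u \<Rightarrow> ('k, 'a) ialg \<Rightarrow> ('u \<Rightarrow> 'a) \<Rightarrow> bool" where
  "inv_alg_hom_to sU q A \<phi> \<longleftrightarrow>
     (\<forall>x. \<phi> x \<in> icar A) \<and>
     (\<forall>x y. \<phi> (x + y) = iadd A (\<phi> x) (\<phi> y)) \<and>
     (\<forall>c x. \<phi> (sU c x) = ism A c (\<phi> x)) \<and>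
     (\<forall>x y. \<phi> (x * y) = imul A (\<phi> x) (\<phi> y)) \<and>
     \<phi> 1 = ione A \<and> \<phi> q = iq A"

definition lie_hom_U ::
  "('k::field \<Rightarrow> 'l::ab_group_add \<Rightarrow> 'l) \<Rightarrow> ('l \<Rightarrow> 'l \<Rightarrow> 'l) \<Rightarrow> 'k \<Rightarrow>
   ('k \<Rightarrow> 'u::ring_1 \<Rightarrow> 'u) \<Rightarrow> 'u \<Rightarrow> ('l \<Rightarrow> 'u) \<Rightarrow> bool" where
  "lie_hom_U sL br k sU q i \<longleftrightarrow>
     (\<forall>x y. i (x + y) = i x + i y) \<and>
     (\<forall>c x. i (sL c x) = sU c (i x)) \<and>
     (\<forall>x y. i (br x y) = bracket6 sU k q (i x) (i y))"

text \<open>The enveloping^{6-th} algebra ((U,q),i) of (L, k).  The universal property is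
quantified over all invariant algebras whose carrier lies in the type 'u of U
(HOL cannot quantify over all types).\<close>

definition enveloping6 ::
  "('k::field \<Rightarrow> 'l::ab_group_add \<Rightarrow> 'l) \<Rightarrow> ('l \<Rightarrow> 'l \<Rightarrow> 'l) \<Rightarrow> 'k \<Rightarrow>
   ('k \<Rightarrow> 'u::ring_1 \<Rightarrow> 'u) \<Rightarrow> 'u \<Rightarrow> ('l \<Rightarrow> 'u) \<Rightarrow> bool" where
  "enveloping6 sL br k sU q i \<longleftrightarrow>
     invariant_algebra sU q \<and> lie_hom_U sL br k sU q i \<and>
     (\<forall>(A :: ('k, 'u) ialg) f. is_invariant_ialg A \<and> lie_hom_ialg sL br k A f \<longrightarrow>
        (\<exists>!\<phi>. inv_alg_hom_to sU q A \<phi> \<and> (\<forall>x. \<phi> (i x) = f x)))"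

section \<open>Tensor products U \<otimes> U and U \<otimes> U \<otimes> U\<close>

text \<open>Standard construction: the free vector space on pairs (finitely supported
functions to 'k) modulo the subspace spanned by the bilinearity relations.
Elements of U \<otimes> U are represented by finitely supported functions
('u \<times> 'u \<Rightarrow> 'k); two representatives denote the same tensor iff their difference lies
in the relation subspace.\<close>

definition fscale :: "'k::field \<Rightarrow> ('p \<Rightarrow> 'k) \<Rightarrow> ('p \<Rightarrow> 'k)" where
  "fscale c F = (\<lambda>p. c * F p)"

definition fsupp :: "('p \<Rightarrow> 'k::zero) \<Rightarrow> 'p set" where
  "fsupp F = {p. F p \<noteq> 0}"

definition tens :: "'a \<Rightarrow> 'b \<Rightarrow> ('a \<times> 'b \<Rightarrow> 'k::field)" where
  "tens a b = (\<lambda>p. if p = (a, b) then 1 else 0)"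

definition tens3 :: "'a \<Rightarrow> 'a \<Rightarrow> 'a \<Rightarrow> ('a \<times> 'a \<times> 'a \<Rightarrow> 'k::field)" where
  "tens3 a b c = (\<lambda>p. if p = (a, b, c) then 1 else 0)"

definition tensor_rel2 :: "('k::field \<Rightarrow> 'u::ab_group_add \<Rightarrow> 'u) \<Rightarrow> ('u \<times> 'u \<Rightarrow> 'k) set" where
  "tensor_rel2 sU = module.span fscale
     ({tens (a + a') b - tens a b - tens a' b | a a' b. True} \<union>
      {tens a (b + b') - tens a b - tens a b' | a b b'. True} \<union>
      {tens (sU c a) b - fscale c (tens a b) | c a b. True} \<union>
      {tens a (sU c b) - fscale c (tens a b) | c a b. True})"

definition tensor_rel3 :: "('k::field \<Rightarrow> 'u::ab_group_add \<Rightarrow> 'u) \<Rightarrow> ('u \<times> 'u \<times> 'u \<Rightarrow> 'k) set" where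
  "tensor_rel3 sU = module.span fscale
     ({tens3 (a + a') b d - tens3 a b d - tens3 a' b d | a a' b d. True} \<union>
      {tens3 a (b + b') d - tens3 a b d - tens3 a b' d | a b b' d. True} \<union>
      {tens3 a b (d + d') - tens3 a b d - tens3 a b d' | a b d d'. True} \<union>
      {tens3 (sU c a) b d - fscale c (tens3 a b d) | c a b d. True} \<union>
      {tens3 a (sU c b) d - fscale c (tens3 a b d) | c a b d. True} \<union>
      {tens3 a b (sU c d) - fscale c (tens3 a b d) | c a b d. True})"

definition teq2 :: "('k::field \<Rightarrow> 'u::ab_group_add \<Rightarrow> 'u) \<Rightarrow> ('u \<times> 'u \<Rightarrow> 'k) \<Rightarrow> ('u \<times> 'u \<Rightarrow> 'k) \<Rightarrow> bool" where
  "teq2 sU F G \<longleftrightarrow> F - G \<in> tensor_rel2 sU"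

definition teq3 :: "('k::field \<Rightarrow> 'u::ab_group_add \<Rightarrow> 'u) \<Rightarrow> ('u \<times> 'u \<times> 'u \<Rightarrow> 'k) \<Rightarrow> ('u \<times> 'u \<times> 'u \<Rightarrow> 'k) \<Rightarrow> bool" where
  "teq3 sU F G \<longleftrightarrow> F - G \<in> tensor_rel3 sU"

definition tmult2 :: "('u::ring_1 \<times> 'u \<Rightarrow> 'k::field) \<Rightarrow> ('u \<times> 'u \<Rightarrow> 'k) \<Rightarrow> ('u \<times> 'u \<Rightarrow> 'k)" where
  "tmult2 F G = (\<lambda>p. \<Sum>(a, b)\<in>fsupp F. \<Sum>(c, d)\<in>fsupp G.
                      if p = (a * c, b * d) then F (a, b) * G (c, d) else 0)"

definition id_tensor :: "('u \<Rightarrow> ('u \<times> 'u \<Rightarrow> 'k::field)) \<Rightarrow> ('u \<times> 'u \<Rightarrow> 'k) \<Rightarrow> ('u \<times> 'u \<times> 'u \<Rightarrow> 'k)" where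
  "id_tensor D F = (\<lambda>(x, y, z). \<Sum>(a, b)\<in>fsupp F. if x = a then F (a, b) * D b (y, z) else 0)"

definition tensor_id :: "('u \<Rightarrow> ('u \<times> 'u \<Rightarrow> 'k::field)) \<Rightarrow> ('u \<times> 'u \<Rightarrow> 'k) \<Rightarrow> ('u \<times> 'u \<times> 'u \<Rightarrow> 'k)" where
  "tensor_id D F = (\<lambda>(x, y, z). \<Sum>(a, b)\<in>fsupp F. if z = b then F (a, b) * D a (x, y) else 0)"

text \<open>(\<epsilon> \<otimes> id) and (id \<otimes> \<epsilon>), composed with the canonical identifications
k \<otimes> U = U = U \<otimes> k (c \<otimes> u \<mapsto> c u).\<close>

definition eps_tensor_id :: "('k::field \<Rightarrow> 'u::ab_group_add \<Rightarrow> 'u) \<Rightarrow> ('u \<Rightarrow> 'k) \<Rightarrow> ('u \<times> 'u \<Rightarrow> 'k) \<Rightarrow> 'u" where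
  "eps_tensor_id sU e F = (\<Sum>(a, b)\<in>fsupp F. sU (F (a, b) * e a) b)"

definition id_tensor_eps :: "('k::field \<Rightarrow> 'u::ab_group_add \<Rightarrow> 'u) \<Rightarrow> ('u \<Rightarrow> 'k) \<Rightarrow> ('u \<times> 'u \<Rightarrow> 'k) \<Rightarrow> 'u" where
  "id_tensor_eps sU e F = (\<Sum>(a, b)\<in>fsupp F. sU (F (a, b) * e b) a)"

definition m_tensor :: "('k::field \<Rightarrow> 'u::ring_1 \<Rightarrow> 'u) \<Rightarrow> ('u \<Rightarrow> 'u) \<Rightarrow> ('u \<Rightarrow> 'u) \<Rightarrow> ('u \<times> 'u \<Rightarrow> 'k) \<Rightarrow> 'u" where
  "m_tensor sU f g F = (\<Sum>(a, b)\<in>fsupp F. sU (F (a, b)) (f a * g b))"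

text \<open>H = 'u with m = (*), u = (\<lambda>c. sU c 1); \<Delta> is given by D (representatives in
U \<otimes> U), \<epsilon> by e, \<sigma> by s.\<close>

definition bialgebra_sigma ::
  "('k::field \<Rightarrow> 'u::ring_1 \<Rightarrow> 'u) \<Rightarrow> ('u \<Rightarrow> ('u \<times> 'u \<Rightarrow> 'k)) \<Rightarrow> ('u \<Rightarrow> 'k) \<Rightarrow> ('u \<Rightarrow> 'u) \<Rightarrow> bool" where
  "bialgebra_sigma sU D e s \<longleftrightarrow>
     \<comment> \<open>(H, m, u) associative unital algebra\<close>
     k_algebra sU \<and>
     \<comment> \<open>\<sigma> linear\<close>
     (\<forall>x y. s (x + y) = s x + s y) \<and> (\<forall>c x. s (sU c x) = sU c (s x)) \<and>
     \<comment> \<open>\<Delta> a linear map H \<rightarrow> H \<otimes> H\<close>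
     (\<forall>h. finite (fsupp (D h))) \<and>
     (\<forall>x y. teq2 sU (D (x + y)) (D x + D y)) \<and>
     (\<forall>c x. teq2 sU (D (sU c x)) (fscale c (D x))) \<and>
     \<comment> \<open>\<epsilon> linear\<close>
     (\<forall>x y. e (x + y) = e x + e y) \<and> (\<forall>c x. e (sU c x) = c * e x) \<and>
     \<comment> \<open>coassociativity\<close>
     (\<forall>h. teq3 sU (id_tensor D (D h)) (tensor_id D (D h))) \<and>
     \<comment> \<open>\<sigma>-counit\<close>
     (\<forall>h. eps_tensor_id sU e (D h) = s h) \<and>
     (\<forall>h. id_tensor_eps sU e (D h) = s h) \<and>
     \<comment> \<open>\<Delta> and \<epsilon> unital algebra homomorphisms\<close>
     (\<forall>x y. teq2 sU (D (x * y)) (tmult2 (D x) (D y))) \<and> teq2 sU (D 1) (tens 1 1) \<and>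
     (\<forall>x y. e (x * y) = e x * e y) \<and> e 1 = 1"

definition hopf_like ::
  "('k::field \<Rightarrow> 'u::ring_1 \<Rightarrow> 'u) \<Rightarrow> ('u \<Rightarrow> ('u \<times> 'u \<Rightarrow> 'k)) \<Rightarrow> ('u \<Rightarrow> 'k) \<Rightarrow> ('u \<Rightarrow> 'u) \<Rightarrow> ('u \<Rightarrow> 'u) \<Rightarrow> bool" where
  "hopf_like sU D e s S \<longleftrightarrow>
     bialgebra_sigma sU D e s \<and>
     (\<forall>x y. S (x + y) = S x + S y) \<and> (\<forall>c x. S (sU c x) = sU c (S x)) \<and>
     (\<forall>h. m_tensor sU S id (D h) = sU (e (S h)) 1) \<and>
     (\<forall>h. m_tensor sU id S (D h) = sU (e (S h)) 1)"

definition invariant_antihom :: "('k::field \<Rightarrow> 'u::ring_1 \<Rightarrow> 'u) \<Rightarrow> 'u \<Rightarrow> ('u \<Rightarrow> 'u) \<Rightarrow> bool" where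
  "invariant_antihom sU q S \<longleftrightarrow>
     (\<forall>x y. S (x + y) = S x + S y) \<and> (\<forall>c x. S (sU c x) = sU c (S x)) \<and>
     (\<forall>a b. S (a * b) = S b * S a) \<and> S 1 = 1 \<and> S q = 1 - q"

end

theory Submission
  imports Defs
begin

lemma vs_fscale: "vector_space (fscale :: 'k::field \<Rightarrow> ('p \<Rightarrow> 'k) \<Rightarrow> _)"
  by unfold_locales (auto simp: fscale_def fun_eq_iff algebra_simps)

lemma vs_mult: "vector_space ((*) :: 'k::field \<Rightarrow> 'k \<Rightarrow> 'k)"
  by unfold_locales (auto simp: algebra_simps)

definition pairG :: "('k::field \<Rightarrow> 'w::ab_group_add \<Rightarrow> 'w) \<Rightarrow> ('p \<Rightarrow> 'k) \<Rightarrow> ('p \<Rightarrow> 'w) \<Rightarrow> 'w" where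
  "pairG sW F \<beta> = (\<Sum>p\<in>fsupp F. sW (F p) (\<beta> p))"

definition bilin :: "('k::field \<Rightarrow> 'u::ab_group_add \<Rightarrow> 'u) \<Rightarrow> ('k \<Rightarrow> 'w::ab_group_add \<Rightarrow> 'w) \<Rightarrow> ('u \<times> 'u \<Rightarrow> 'w) \<Rightarrow> bool" where
  "bilin sU sW \<beta> \<longleftrightarrow>
    (\<forall>a a' b. \<beta> (a + a', b) = \<beta> (a, b) + \<beta> (a', b)) \<and>
    (\<forall>a b b'. \<beta> (a, b + b') = \<beta> (a, b) + \<beta> (a, b')) \<and>
    (\<forall>c a b. \<beta> (sU c a, b) = sW c (\<beta> (a, b))) \<and>
    (\<forall>c a b. \<beta> (a, sU c b) = sW c (\<beta> (a, b)))"

lemma fsupp_add: "fsupp (F + G :: _ \<Rightarrow> 'k::field) \<subseteq> fsupp F \<union> fsupp G"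
  by (auto simp: fsupp_def)
lemma fsupp_diff: "fsupp (F - G :: _ \<Rightarrow> 'k::field) \<subseteq> fsupp F \<union> fsupp G"
  by (auto simp: fsupp_def)
lemma fsupp_fscale: "fsupp (fscale c F :: _ \<Rightarrow> 'k::field) \<subseteq> fsupp F"
  by (auto simp: fsupp_def fscale_def)

lemma fin_add[simp]: "finite (fsupp F) \<Longrightarrow> finite (fsupp G) \<Longrightarrow> finite (fsupp (F + G :: _ \<Rightarrow> 'k::field))"
  by (meson finite_UnI finite_subset fsupp_add)
lemma fin_diff[simp]: "finite (fsupp F) \<Longrightarrow> finite (fsupp G) \<Longrightarrow> finite (fsupp (F - G :: _ \<Rightarrow> 'k::field))"
  by (meson finite_UnI finite_subset fsupp_diff)
lemma fin_fscale[simp]: "finite (fsupp F) \<Longrightarrow> finite (fsupp (fscale c F :: _ \<Rightarrow> 'k::field))"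
  by (meson finite_subset fsupp_fscale)
lemma fin_tens[simp]: "finite (fsupp (tens a b :: _ \<Rightarrow> 'k::field))"
  by (simp add: fsupp_def tens_def)

context
  fixes sW :: "'k::field \<Rightarrow> 'w::ab_group_add \<Rightarrow> 'w"
  assumes vsW: "vector_space sW"
begin

interpretation W: vector_space sW by (rule vsW)

lemma pairG_superset:
  assumes "finite T" "fsupp F \<subseteq> T"
  shows "pairG sW F \<beta> = (\<Sum>p\<in>T. sW (F p) (\<beta> p))"
  unfolding pairG_def
  by (rule sum.mono_neutral_left) (use assms in \<open>auto simp: fsupp_def\<close>)

lemma pairG_add:
  assumes "finite (fsupp F)" "finite (fsupp G)"
  shows "pairG sW (F + G) \<beta> = pairG sW F \<beta> + pairG sW G \<beta>"
proof -
  let ?T = "fsupp F \<union> fsupp G"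
  have "pairG sW (F + G) \<beta> = (\<Sum>p\<in>?T. sW ((F + G) p) (\<beta> p))"
    by (rule pairG_superset) (use assms fsupp_add[of F G] in blast)+
  also have "\<dots> = (\<Sum>p\<in>?T. sW (F p) (\<beta> p)) + (\<Sum>p\<in>?T. sW (G p) (\<beta> p))"
    by (simp add: W.scale_left_distrib sum.distrib)
  also have "\<dots> = pairG sW F \<beta> + pairG sW G \<beta>"
    by (subst (1 2) pairG_superset[of ?T]) (use assms in auto)
  finally show ?thesis .
qed

lemma pairG_diff:
  assumes "finite (fsupp F)" "finite (fsupp G)"
  shows "pairG sW (F - G) \<beta> = pairG sW F \<beta> - pairG sW G \<beta>"
proof -
  let ?T = "fsupp F \<union> fsupp G"
  have "pairG sW (F - G) \<beta> = (\<Sum>p\<in>?T. sW ((F - G) p) (\<beta> p))"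
    by (rule pairG_superset) (use assms fsupp_diff[of F G] in blast)+
  also have "\<dots> = (\<Sum>p\<in>?T. sW (F p) (\<beta> p)) - (\<Sum>p\<in>?T. sW (G p) (\<beta> p))"
    by (simp add: W.scale_left_diff_distrib sum_subtractf)
  also have "\<dots> = pairG sW F \<beta> - pairG sW G \<beta>"
    by (subst (1 2) pairG_superset[of ?T]) (use assms in auto)
  finally show ?thesis .
qed

lemma pairG_fscale:
  assumes "finite (fsupp F)"
  shows "pairG sW (fscale c F) \<beta> = sW c (pairG sW F \<beta>)"
proof -
  have "pairG sW (fscale c F) \<beta> = (\<Sum>p\<in>fsupp F. sW (fscale c F p) (\<beta> p))"
    by (rule pairG_superset) (use assms fsupp_fscale[of c F] in blast)+
  also have "\<dots> = sW c (pairG sW F \<beta>)"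
    by (simp add: pairG_def W.scale_sum_right fscale_def)
  finally show ?thesis .
qed

lemma fsupp_tens: "fsupp (tens a b :: _ \<Rightarrow> 'k::field) = {(a, b)}"
  by (auto simp: fsupp_def tens_def)

lemma pairG_tens: "pairG sW (tens a b) \<beta> = \<beta> (a, b)"
  by (simp add: pairG_def fsupp_tens) (simp add: tens_def)

lemma pairG_zero: "pairG sW 0 \<beta> = 0"
  by (simp add: pairG_def fsupp_def zero_fun_def)

lemma pairG_beta_add: "pairG sW F (\<lambda>p. f p + g p) = pairG sW F f + pairG sW F g"
  by (simp add: pairG_def W.scale_right_distrib sum.distrib)

lemma pairG_beta_scale: "pairG sW F (\<lambda>p. sW c (f p)) = sW c (pairG sW F f)"
  by (simp add: pairG_def W.scale_sum_right mult.commute)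

lemma pairG_cong: "(\<And>p. p \<in> fsupp F \<Longrightarrow> f p = g p) \<Longrightarrow> pairG sW F f = pairG sW F g"
  by (simp add: pairG_def)

lemma rel2_pairG:
  assumes "R \<in> tensor_rel2 sU" "bilin sU sW \<beta>"
  shows "finite (fsupp R) \<and> pairG sW R \<beta> = 0"
proof -
  interpret V: vector_space "fscale :: 'k \<Rightarrow> ('u \<times> 'u \<Rightarrow> 'k) \<Rightarrow> _" by (rule vs_fscale)
  from assms(1) show ?thesis unfolding tensor_rel2_def
  proof (induct rule: V.span_induct_alt)
    case base then show ?case by (simp add: pairG_def fsupp_def zero_fun_def)
  next
    case (step c x y)
    have fx: "finite (fsupp x)"
      using step(1) by auto
    have "pairG sW x \<beta> = 0"
      using step(1) assms(2) fx unfolding bilin_def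
      by (auto simp: pairG_diff pairG_tens pairG_fscale fsupp_tens fsupp_add
          intro: finite_subset[OF fsupp_diff] finite_subset[OF fsupp_fscale])
    moreover have "finite (fsupp (fscale c x + y))"
      using fx step(2) by (meson finite_UnI finite_subset fsupp_add fsupp_fscale)
    moreover have "pairG sW (fscale c x + y) \<beta> = pairG sW (fscale c x) \<beta> + pairG sW y \<beta>"
      using step(2) fx by (intro pairG_add) auto
    ultimately show ?case using step(2) fx
      by (simp only: pairG_fscale) simp
  qed
qed

end

context
  fixes sW :: "'k::field \<Rightarrow> 'w::ab_group_add \<Rightarrow> 'w"
  assumes vsW: "vector_space sW"
begin

interpretation W: vector_space sW by (rule vsW)

lemma teq2_pairG:
  assumes "teq2 sU F G" "finite (fsupp F)" "finite (fsupp G)" "bilin sU sW \<beta>"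
  shows "pairG sW F \<beta> = pairG sW G \<beta>"
proof -
  have "pairG sW (F - G) \<beta> = 0"
    using rel2_pairG[OF vsW, of "F - G" sU \<beta>] assms unfolding teq2_def by auto
  then show ?thesis using pairG_diff[OF vsW assms(2,3)] by simp
qed

lemma pairG_swap:
  "pairG sW F (\<lambda>p. pairG sW G (\<lambda>r. f p r)) = pairG sW G (\<lambda>r. pairG sW F (\<lambda>p. f p r))"
proof -
  have "pairG sW F (\<lambda>p. pairG sW G (\<lambda>r. f p r)) = (\<Sum>p\<in>fsupp F. \<Sum>r\<in>fsupp G. sW (F p * G r) (f p r))"
    by (simp add: pairG_def W.scale_sum_right)
  also have "\<dots> = (\<Sum>r\<in>fsupp G. \<Sum>p\<in>fsupp F. sW (F p * G r) (f p r))"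
    by (rule sum.swap)
  also have "\<dots> = pairG sW G (\<lambda>r. pairG sW F (\<lambda>p. f p r))"
    by (simp add: pairG_def W.scale_sum_right mult.commute)
  finally show ?thesis .
qed

lemma pairG_tmult2:
  fixes F G :: "'u::ring_1 \<times> 'u \<Rightarrow> 'k"
  assumes fF: "finite (fsupp F)" and fG: "finite (fsupp G)"
  shows "pairG sW (tmult2 F G) \<beta> =
         pairG sW F (\<lambda>p. pairG sW G (\<lambda>r. \<beta> (fst p * fst r, snd p * snd r)))"
proof -
  define m :: "'u \<times> 'u \<Rightarrow> 'u \<times> 'u \<Rightarrow> 'u \<times> 'u" where "m = (\<lambda>p r. (fst p * fst r, snd p * snd r))"
  define T where "T = (\<lambda>(p, r). m p r) ` (fsupp F \<times> fsupp G)"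
  have fT: "finite T" unfolding T_def using fF fG by simp
  have tm: "tmult2 F G t = (\<Sum>p\<in>fsupp F. \<Sum>r\<in>fsupp G. if t = m p r then F p * G r else 0)" for t
    unfolding tmult2_def m_def by (intro sum.cong refl) (simp only: case_prod_unfold prod.collapse)
  have sub: "fsupp (tmult2 F G) \<subseteq> T"
  proof
    fix t assume "t \<in> fsupp (tmult2 F G)"
    then have "tmult2 F G t \<noteq> 0" by (simp add: fsupp_def)
    then obtain p r where "p \<in> fsupp F" "r \<in> fsupp G" "t = m p r"
    proof -
      from \<open>tmult2 F G t \<noteq> 0\<close> have "(\<Sum>p\<in>fsupp F. \<Sum>r\<in>fsupp G. if t = m p r then F p * G r else 0) \<noteq> 0"
        unfolding tm .
      then obtain p where p: "p \<in> fsupp F"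
        "(\<Sum>r\<in>fsupp G. if t = m p r then F p * G r else 0) \<noteq> 0"
        by (rule sum.not_neutral_contains_not_neutral)
      from p(2) obtain r where "r \<in> fsupp G" "(if t = m p r then F p * G r else 0) \<noteq> 0"
        by (rule sum.not_neutral_contains_not_neutral)
      then show ?thesis using p(1) that by (auto split: if_splits)
    qed
    then show "t \<in> T" unfolding T_def by (intro image_eqI[where x="(p, r)"]) simp_all
  qed
  have "pairG sW (tmult2 F G) \<beta> = (\<Sum>t\<in>T. sW (tmult2 F G t) (\<beta> t))"
    by (rule pairG_superset[OF vsW fT sub])
  also have "\<dots> = (\<Sum>t\<in>T. \<Sum>p\<in>fsupp F. \<Sum>r\<in>fsupp G. if t = m p r then sW (F p * G r) (\<beta> t) else 0)"
    unfolding tm W.scale_sum_left by (intro sum.cong refl) auto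
  also have "\<dots> = (\<Sum>p\<in>fsupp F. \<Sum>r\<in>fsupp G. \<Sum>t\<in>T. if t = m p r then sW (F p * G r) (\<beta> t) else 0)"
    by (subst sum.swap, rule sum.cong[OF refl], rule sum.swap)
  also have "\<dots> = (\<Sum>p\<in>fsupp F. \<Sum>r\<in>fsupp G. sW (F p * G r) (\<beta> (m p r)))"
  proof (intro sum.cong refl)
    fix p r assume "p \<in> fsupp F" "r \<in> fsupp G"
    then have "m p r \<in> T" unfolding T_def by auto
    then show "(\<Sum>t\<in>T. if t = m p r then sW (F p * G r) (\<beta> t) else 0) = sW (F p * G r) (\<beta> (m p r))"
      using fT by (simp add: sum.delta')
  qed
  also have "\<dots> = pairG sW F (\<lambda>p. pairG sW G (\<lambda>r. \<beta> (fst p * fst r, snd p * snd r)))"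
    unfolding pairG_def m_def by (simp add: W.scale_sum_right)
  finally show ?thesis .
qed

end

lemma fin_tmult2:
  fixes F G :: "'u::ring_1 \<times> 'u \<Rightarrow> 'k::field"
  assumes fF: "finite (fsupp F)" and fG: "finite (fsupp G)"
  shows "finite (fsupp (tmult2 F G))"
proof -
  define m :: "'u \<times> 'u \<Rightarrow> 'u \<times> 'u \<Rightarrow> 'u \<times> 'u" where "m = (\<lambda>p r. (fst p * fst r, snd p * snd r))"
  define T where "T = (\<lambda>(p, r). m p r) ` (fsupp F \<times> fsupp G)"
  have fT: "finite T" unfolding T_def using fF fG by simp
  have tm: "tmult2 F G t = (\<Sum>p\<in>fsupp F. \<Sum>r\<in>fsupp G. if t = m p r then F p * G r else 0)" for t
    unfolding tmult2_def m_def by (intro sum.cong refl) (simp only: case_prod_unfold prod.collapse)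
  have sub: "fsupp (tmult2 F G) \<subseteq> T"
  proof
    fix t assume "t \<in> fsupp (tmult2 F G)"
    then have "tmult2 F G t \<noteq> 0" by (simp add: fsupp_def)
    then obtain p r where "p \<in> fsupp F" "r \<in> fsupp G" "t = m p r"
    proof -
      from \<open>tmult2 F G t \<noteq> 0\<close> have "(\<Sum>p\<in>fsupp F. \<Sum>r\<in>fsupp G. if t = m p r then F p * G r else 0) \<noteq> 0"
        unfolding tm .
      then obtain p where p: "p \<in> fsupp F"
        "(\<Sum>r\<in>fsupp G. if t = m p r then F p * G r else 0) \<noteq> 0"
        by (rule sum.not_neutral_contains_not_neutral)
      from p(2) obtain r where "r \<in> fsupp G" "(if t = m p r then F p * G r else 0) \<noteq> 0"
        by (rule sum.not_neutral_contains_not_neutral)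
      then show ?thesis using p(1) that by (auto split: if_splits)
    qed
    then show "t \<in> T" unfolding T_def by (intro image_eqI[where x="(p, r)"]) simp_all
  qed
  show ?thesis using fT sub by (rule finite_subset[rotated])
qed

lemma pairG_mult_left:
  assumes "k_algebra sU"
  shows "pairG sU F (\<lambda>p. u * f p) = u * pairG sU F f"
proof -
  have h: "\<And>c x y. sU c (x * y) = x * sU c y" using assms unfolding k_algebra_def by metis
  show ?thesis unfolding pairG_def by (simp only: h sum_distrib_left)
qed

lemma pairG_mult_right:
  assumes "k_algebra sU"
  shows "pairG sU F (\<lambda>p. f p * w) = pairG sU F f * w"
proof -
  have h: "\<And>c x y. sU c (x * y) = sU c x * y" using assms unfolding k_algebra_def by metis
  show ?thesis unfolding pairG_def by (simp only: h sum_distrib_right)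
qed

locale setting =
  fixes sU :: "'k::field \<Rightarrow> 'u::ring_1 \<Rightarrow> 'u" and q :: 'u
    and D :: "'u \<Rightarrow> ('u \<times> 'u \<Rightarrow> 'k)" and k :: 'k and i :: "'l::ab_group_add \<Rightarrow> 'u"
  assumes inv: "invariant_algebra sU q"
    and D_fin: "\<forall>h. finite (fsupp (D h))"
    and D_add: "\<forall>x y. teq2 sU (D (x + y)) (D x + D y)"
    and D_smult: "\<forall>c x. teq2 sU (D (sU c x)) (fscale c (D x))"
    and D_mult: "\<forall>x y. teq2 sU (D (x * y)) (tmult2 (D x) (D y))"
    and D_one: "teq2 sU (D 1) (tens 1 1)"
    and D_q: "teq2 sU (D q) (tens q q)"
    and D_i: "\<forall>a. let x = i a; y = x + sU k (q * x) - x * q in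
               teq2 sU (D x)
                 (tens y 1 + tens 1 y + fscale (1 - k) (tens (q * x) q)
                   + fscale (1 - k) (tens q (q * x)))"
begin

lemma kalg: "k_algebra sU" using inv by (simp add: invariant_algebra_def)
lemma vsU: "vector_space sU" using kalg by (simp add: k_algebra_def)
interpretation U: vector_space sU by (rule vsU)
lemma sm_l: "sU c (x * y) = sU c x * y" using kalg by (simp add: k_algebra_def)
lemma sm_r: "sU c (x * y) = x * sU c y" using kalg unfolding k_algebra_def by metis
lemma qq: "q * q = q" using inv by (simp add: invariant_algebra_def)
lemma qxq: "q * x * q = q * x" using inv by (simp add: invariant_algebra_def)

lemma Dfin[simp]: "finite (fsupp (D h))" using D_fin by simp

definition B :: "('k \<Rightarrow> 'w::ab_group_add \<Rightarrow> 'w) \<Rightarrow> ('u \<times> 'u \<Rightarrow> 'w) \<Rightarrow> 'u \<Rightarrow> 'w" where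
  "B sW \<beta> h = pairG sW (D h) \<beta>"

context
  fixes sW :: "'k \<Rightarrow> 'w::ab_group_add \<Rightarrow> 'w"
  assumes vsW: "vector_space sW"
begin

interpretation W: vector_space sW by (rule vsW)

lemma B_add: "bilin sU sW \<beta> \<Longrightarrow> B sW \<beta> (x + y) = B sW \<beta> x + B sW \<beta> y"
  unfolding B_def
  by (subst teq2_pairG[OF vsW D_add[rule_format]]) (simp_all add: pairG_add[OF vsW])

lemma B_smult: "bilin sU sW \<beta> \<Longrightarrow> B sW \<beta> (sU c x) = sW c (B sW \<beta> x)"
  unfolding B_def
  by (subst teq2_pairG[OF vsW D_smult[rule_format]]) (simp_all add: pairG_fscale[OF vsW])

lemma B_mult: "bilin sU sW \<beta> \<Longrightarrow>
   B sW \<beta> (x * y) = B sW (\<lambda>p. B sW (\<lambda>r. \<beta> (fst p * fst r, snd p * snd r)) y) x"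
  unfolding B_def
  by (subst teq2_pairG[OF vsW D_mult[rule_format]]) (simp_all add: pairG_tmult2[OF vsW] fin_tmult2)

lemma B_one: "bilin sU sW \<beta> \<Longrightarrow> B sW \<beta> 1 = \<beta> (1, 1)"
  unfolding B_def
  by (subst teq2_pairG[OF vsW D_one]) (simp_all add: pairG_tens[OF vsW])

lemma B_q: "bilin sU sW \<beta> \<Longrightarrow> B sW \<beta> q = \<beta> (q, q)"
  unfolding B_def
  by (subst teq2_pairG[OF vsW D_q]) (simp_all add: pairG_tens[OF vsW])

lemma B_i: 
  assumes "bilin sU sW \<beta>"
  shows "B sW \<beta> (i a) = \<beta> (i a + sU k (q * i a) - i a * q, 1) + \<beta> (1, i a + sU k (q * i a) - i a * q)
     + sW (1 - k) (\<beta> (q * i a, q)) + sW (1 - k) (\<beta> (q, q * i a))"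
proof -
  define y where "y = i a + sU k (q * i a) - i a * q"
  have t: "teq2 sU (D (i a)) (tens y 1 + tens 1 y + fscale (1 - k) (tens (q * i a) q)
                   + fscale (1 - k) (tens q (q * i a)))"
    using D_i[rule_format, of a] unfolding y_def Let_def .
  show ?thesis unfolding B_def y_def[symmetric]
    by (subst teq2_pairG[OF vsW t]) (simp_all add: assms pairG_add[OF vsW] pairG_fscale[OF vsW] pairG_tens[OF vsW])
qed

lemma B_neg: "bilin sU sW \<beta> \<Longrightarrow> B sW \<beta> (- x) = - B sW \<beta> x"
  using B_smult[of \<beta> "-1" x] by simp

lemma B_diff: "bilin sU sW \<beta> \<Longrightarrow> B sW \<beta> (x - y) = B sW \<beta> x - B sW \<beta> y"
  using B_add[of \<beta> x "- y"] B_neg[of \<beta> y] by simp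

lemma B_beta_add: "B sW (\<lambda>p. f p + g p) h = B sW f h + B sW g h"
  unfolding B_def by (rule pairG_beta_add[OF vsW])

lemma B_beta_scale: "B sW (\<lambda>p. sW c (f p)) h = sW c (B sW f h)"
  unfolding B_def by (rule pairG_beta_scale[OF vsW])

lemma B_swap: "B sW (\<lambda>p. B sW (\<lambda>r. f p r) y) x = B sW (\<lambda>r. B sW (\<lambda>p. f p r) x) y"
  unfolding B_def by (rule pairG_swap[OF vsW])

end
end

lemma bilinD:
  assumes "bilin sU sW \<beta>"
  shows "\<beta> (a + a', b) = \<beta> (a, b) + \<beta> (a', b)" "\<beta> (a, b + b') = \<beta> (a, b) + \<beta> (a, b')"
    "\<beta> (sU c a, b) = sW c (\<beta> (a, b))" "\<beta> (a, sU c b) = sW c (\<beta> (a, b))"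
  using assms unfolding bilin_def by auto

lemma bilinD2:
  fixes \<beta> :: "'u::ab_group_add \<times> 'u \<Rightarrow> 'w::ab_group_add"
  assumes "bilin sU sW \<beta>"
  shows "\<beta> (a - a', b) = \<beta> (a, b) - \<beta> (a', b)" "\<beta> (a, b - b') = \<beta> (a, b) - \<beta> (a, b')"
proof -
  have "\<beta> (a - a' + a', b) = \<beta> (a - a', b) + \<beta> (a', b)" by (rule bilinD(1)[OF assms])
  then show "\<beta> (a - a', b) = \<beta> (a, b) - \<beta> (a', b)" by (simp add: eq_diff_eq)
  have "\<beta> (a, b - b' + b') = \<beta> (a, b - b') + \<beta> (a, b')" by (rule bilinD(2)[OF assms])
  then show "\<beta> (a, b - b') = \<beta> (a, b) - \<beta> (a, b')" by (simp add: eq_diff_eq)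
qed

context setting
begin

interpretation U: vector_space sU by (rule vsU)

lemma qP: "q * (q * x) = q * x" by (simp only: mult.assoc[symmetric] qq)
lemma Pq: "q * x * q = q * x" by (rule qxq)

lemma qy: "q * (x + sU k (q * x) - x * q) = sU k (q * x)"
proof -
  have a: "q * sU k (q * x) = sU k (q * x)" using sm_r[of k q "q * x"] qP by simp
  have b: "q * (x * q) = q * x" using qxq by (simp only: mult.assoc[symmetric])
  show ?thesis by (simp only: distrib_left right_diff_distrib a b) simp
qed

lemma yq: "(x + sU k (q * x) - x * q) * q = sU k (q * x)"
proof -
  have a: "sU k (q * x) * q = sU k (q * x)" using sm_l[of k "q * x" q] qxq by simp
  have b: "x * q * q = x * q" by (simp only: mult.assoc qq)
  show ?thesis by (simp only: distrib_right left_diff_distrib a b) simp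
qed

context
  fixes sW :: "'k \<Rightarrow> 'w::ab_group_add \<Rightarrow> 'w"
  assumes vsW: "vector_space sW"
begin

interpretation W: vector_space sW by (rule vsW)

lemma bl_shift: "bilin sU sW \<beta> \<Longrightarrow> bilin sU sW (\<lambda>r. \<beta> (a * fst r, b * snd r))"
  unfolding bilin_def by (simp add: distrib_left sm_r[symmetric])

lemma bl_shiftR: "bilin sU sW \<beta> \<Longrightarrow> bilin sU sW (\<lambda>p. \<beta> (fst p * c, snd p * d))"
  unfolding bilin_def by (simp add: distrib_right sm_l[symmetric])

lemma bl_Bmult: "bilin sU sW \<beta> \<Longrightarrow> bilin sU sW (\<lambda>p. B sW (\<lambda>r. \<beta> (fst p * fst r, snd p * snd r)) y)"
  unfolding bilin_def
  by (simp add: distrib_right sm_l[symmetric] B_beta_add[OF vsW] B_beta_scale[OF vsW])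

lemma B_P:
  assumes bl: "bilin sU sW \<beta>"
  shows "B sW \<beta> (q * i a) = \<beta> (q * i a, q) + \<beta> (q, q * i a)"
proof -
  let ?x = "i a"
  let ?P = "q * i a"
  have "B sW \<beta> (q * ?x) = B sW (\<lambda>r. \<beta> (q * fst r, q * snd r)) ?x"
    by (simp add: B_mult[OF vsW bl] B_q[OF vsW bl_Bmult[OF bl]])
  also have "\<dots> = sW k (\<beta> (?P, q)) + sW k (\<beta> (q, ?P)) + sW (1 - k) (\<beta> (?P, q)) + sW (1 - k) (\<beta> (q, ?P))"
    by (simp add: B_i[OF vsW bl_shift[OF bl]] qy qP qq bilinD(3,4)[OF bl])
  also have "\<dots> = \<beta> (?P, q) + \<beta> (q, ?P)"
    by (simp add: algebra_simps W.scale_left_diff_distrib)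
  finally show ?thesis .
qed

lemma B_xq:
  assumes bl: "bilin sU sW \<beta>"
  shows "B sW \<beta> (i a * q) = \<beta> (q * i a, q) + \<beta> (q, q * i a)"
proof -
  let ?x = "i a"
  let ?P = "q * i a"
  have "B sW \<beta> (?x * q) = B sW (\<lambda>p. \<beta> (fst p * q, snd p * q)) ?x"
    by (simp add: B_mult[OF vsW bl] B_q[OF vsW bl_shift[OF bl]])
  also have "\<dots> = sW k (\<beta> (?P, q)) + sW k (\<beta> (q, ?P)) + sW (1 - k) (\<beta> (?P, q)) + sW (1 - k) (\<beta> (q, ?P))"
    by (simp add: B_i[OF vsW bl_shiftR[OF bl]] yq Pq qq bilinD(3,4)[OF bl])
  also have "\<dots> = \<beta> (?P, q) + \<beta> (q, ?P)"
    by (simp add: algebra_simps W.scale_left_diff_distrib)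
  finally show ?thesis .
qed

lemma B_y:
  assumes bl: "bilin sU sW \<beta>"
  shows "B sW \<beta> (i a + sU k (q * i a) - i a * q) =
     \<beta> (i a + sU k (q * i a) - i a * q, 1) + \<beta> (1, i a + sU k (q * i a) - i a * q)"
proof -
  let ?u = "\<beta> (q * i a, q) + \<beta> (q, q * i a)"
  have "B sW \<beta> (i a + sU k (q * i a) - i a * q) = B sW \<beta> (i a) + sW k ?u - ?u"
    by (simp add: B_diff[OF vsW bl] B_add[OF vsW bl] B_smult[OF vsW bl] B_P[OF bl] B_xq[OF bl])
  also have "\<dots> = \<beta> (i a + sU k (q * i a) - i a * q, 1) + \<beta> (1, i a + sU k (q * i a) - i a * q)
     + (sW (1 - k) ?u + sW k ?u - ?u)"
    by (simp add: B_i[OF vsW bl] W.scale_right_distrib algebra_simps)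
  also have "sW (1 - k) ?u + sW k ?u - ?u = 0"
    by (simp add: W.scale_left_distrib[symmetric])
  finally show ?thesis by simp
qed

end
end

definition tril :: "('k::field \<Rightarrow> 'u::ab_group_add \<Rightarrow> 'u) \<Rightarrow> ('u \<times> 'u \<times> 'u \<Rightarrow> 'k) \<Rightarrow> bool" where
  "tril sU \<gamma> \<longleftrightarrow>
    (\<forall>a a' b c. \<gamma> (a + a', b, c) = \<gamma> (a, b, c) + \<gamma> (a', b, c)) \<and>
    (\<forall>a b b' c. \<gamma> (a, b + b', c) = \<gamma> (a, b, c) + \<gamma> (a, b', c)) \<and>
    (\<forall>a b c c'. \<gamma> (a, b, c + c') = \<gamma> (a, b, c) + \<gamma> (a, b, c')) \<and>
    (\<forall>t a b c. \<gamma> (sU t a, b, c) = t * \<gamma> (a, b, c)) \<and>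
    (\<forall>t a b c. \<gamma> (a, sU t b, c) = t * \<gamma> (a, b, c)) \<and>
    (\<forall>t a b c. \<gamma> (a, b, sU t c) = t * \<gamma> (a, b, c))"

lemma trilD:
  assumes "tril sU \<gamma>"
  shows "\<gamma> (a + a', b, c) = \<gamma> (a, b, c) + \<gamma> (a', b, c)"
    "\<gamma> (a, b + b', c) = \<gamma> (a, b, c) + \<gamma> (a, b', c)"
    "\<gamma> (a, b, c + c') = \<gamma> (a, b, c) + \<gamma> (a, b, c')"
    "\<gamma> (sU t a, b, c) = t * \<gamma> (a, b, c)"
    "\<gamma> (a, sU t b, c) = t * \<gamma> (a, b, c)"
    "\<gamma> (a, b, sU t c) = t * \<gamma> (a, b, c)"
  using assms unfolding tril_def by auto

lemma trilD':
  assumes "tril sU \<gamma>"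
  shows "\<gamma> (a + a', r) = \<gamma> (a, r) + \<gamma> (a', r)"
    "\<gamma> (sU t a, r) = t * \<gamma> (a, r)"
  using trilD(1)[OF assms, of a a' "fst r" "snd r"] apply simp
  using trilD(4)[OF assms, of t a "fst r" "snd r"] by simp

context setting
begin

inductive_set gen where
  gen_one: "1 \<in> gen"
| gen_q: "q \<in> gen"
| gen_i: "i a \<in> gen"
| gen_add: "x \<in> gen \<Longrightarrow> y \<in> gen \<Longrightarrow> x + y \<in> gen"
| gen_smult: "x \<in> gen \<Longrightarrow> sU c x \<in> gen"
| gen_mult: "x \<in> gen \<Longrightarrow> y \<in> gen \<Longrightarrow> x * y \<in> gen"

abbreviation "Bk \<equiv> B ((*) :: 'k \<Rightarrow> 'k \<Rightarrow> 'k)"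

definition C1 :: "('u \<times> 'u \<times> 'u \<Rightarrow> 'k) \<Rightarrow> 'u \<Rightarrow> 'k" where
  "C1 \<gamma> h = Bk (\<lambda>p. Bk (\<lambda>r. \<gamma> (fst p, r)) (snd p)) h"
definition C2 :: "('u \<times> 'u \<times> 'u \<Rightarrow> 'k) \<Rightarrow> 'u \<Rightarrow> 'k" where
  "C2 \<gamma> h = Bk (\<lambda>p. Bk (\<lambda>r. \<gamma> (fst r, snd r, snd p)) (fst p)) h"

lemmas vk = vs_mult

lemma slice1: "tril sU \<gamma> \<Longrightarrow> bilin sU (*) (\<lambda>r. \<gamma> (a, r))"
  unfolding bilin_def by (simp add: trilD)
lemma slice3: "tril sU \<gamma> \<Longrightarrow> bilin sU (*) (\<lambda>r. \<gamma> (fst r, snd r, b))"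
  unfolding bilin_def by (simp add: trilD)

lemma bl1: "tril sU \<gamma> \<Longrightarrow> bilin sU (*) (\<lambda>p. Bk (\<lambda>r. \<gamma> (fst p, r)) (snd p))"
  unfolding bilin_def
  by (simp add: trilD' B_beta_add[OF vk] B_beta_scale[OF vk] B_add[OF vk slice1] B_smult[OF vk slice1])

lemma bl2: "tril sU \<gamma> \<Longrightarrow> bilin sU (*) (\<lambda>p. Bk (\<lambda>r. \<gamma> (fst r, snd r, snd p)) (fst p))"
  unfolding bilin_def
  by (simp add: trilD B_beta_add[OF vk] B_beta_scale[OF vk] B_add[OF vk slice3] B_smult[OF vk slice3])

lemma C_one: "tril sU \<gamma> \<Longrightarrow> C1 \<gamma> 1 = C2 \<gamma> 1"
  unfolding C1_def C2_def by (simp add: B_one[OF vk bl1] B_one[OF vk bl2] B_one[OF vk slice1] B_one[OF vk slice3])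

lemma C_q: "tril sU \<gamma> \<Longrightarrow> C1 \<gamma> q = C2 \<gamma> q"
  unfolding C1_def C2_def by (simp add: B_q[OF vk bl1] B_q[OF vk bl2] B_q[OF vk slice1] B_q[OF vk slice3])

lemma C_add: "tril sU \<gamma> \<Longrightarrow> C1 \<gamma> (x + y) = C1 \<gamma> x + C1 \<gamma> y"
    "tril sU \<gamma> \<Longrightarrow> C2 \<gamma> (x + y) = C2 \<gamma> x + C2 \<gamma> y"
  unfolding C1_def C2_def by (simp_all add: B_add[OF vk bl1] B_add[OF vk bl2])

lemma C_smult: "tril sU \<gamma> \<Longrightarrow> C1 \<gamma> (sU c x) = c * C1 \<gamma> x"
    "tril sU \<gamma> \<Longrightarrow> C2 \<gamma> (sU c x) = c * C2 \<gamma> x"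
  unfolding C1_def C2_def by (simp_all add: B_smult[OF vk bl1] B_smult[OF vk bl2])

lemma C_i: assumes tg: "tril sU \<gamma>" shows "C1 \<gamma> (i a) = C2 \<gamma> (i a)"
  unfolding C1_def C2_def
  by (simp add: B_i[OF vk bl1[OF tg]] B_i[OF vk bl2[OF tg]] B_one[OF vk slice1[OF tg]] B_one[OF vk slice3[OF tg]]
     B_q[OF vk slice1[OF tg]] B_q[OF vk slice3[OF tg]] B_P[OF vk slice1[OF tg]] B_P[OF vk slice3[OF tg]]
     B_y[OF vk slice1[OF tg]] B_y[OF vk slice3[OF tg]] algebra_simps)

lemma tril_shift: "tril sU \<gamma> \<Longrightarrow> tril sU (\<lambda>t. \<gamma> (a * fst t, b * fst (snd t), c * snd (snd t)))"
  unfolding tril_def by (simp add: distrib_left sm_r[symmetric])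

lemma tril_K: "tril sU \<gamma> \<Longrightarrow>
  tril sU (\<lambda>t. Bk (\<lambda>r. Bk (\<lambda>s. \<gamma> (fst t * fst s, fst (snd t) * snd s, snd (snd t) * snd r)) (fst r)) y)"
  unfolding tril_def
  by (simp add: distrib_right sm_l[symmetric] B_beta_add[OF vk] B_beta_scale[OF vk])

lemma C_mult:
  assumes IHx: "\<forall>\<gamma>. tril sU \<gamma> \<longrightarrow> C1 \<gamma> x = C2 \<gamma> x"
    and IHy: "\<forall>\<gamma>. tril sU \<gamma> \<longrightarrow> C1 \<gamma> y = C2 \<gamma> y"
    and tg: "tril sU \<gamma>"
  shows "C1 \<gamma> (x * y) = C2 \<gamma> (x * y)"
proof -
  define F :: "'u \<times> 'u \<Rightarrow> 'u \<times> 'u \<Rightarrow> 'u \<times> 'u \<Rightarrow> 'k" where "F = (\<lambda>p r u. Bk (\<lambda>v. \<gamma> (fst p * fst r, fst u * fst v, snd u * snd v)) (snd r))"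
  define K :: "'u \<times> 'u \<times> 'u \<Rightarrow> 'k" where "K = (\<lambda>t. Bk (\<lambda>r. Bk (\<lambda>s. \<gamma> (fst t * fst s, fst (snd t) * snd s, snd (snd t) * snd r)) (fst r)) y)"
  define G :: "'u \<times> 'u \<Rightarrow> 'u \<times> 'u \<Rightarrow> 'u \<times> 'u \<Rightarrow> 'k" where "G = (\<lambda>p r w. Bk (\<lambda>s. \<gamma> (fst w * fst s, snd w * snd s, snd p * snd r)) (fst r))"
  have s1: "C1 \<gamma> (x * y) = Bk (\<lambda>p. Bk (\<lambda>r. Bk (\<lambda>u. F p r u) (snd p)) y) x"
    unfolding C1_def F_def by (simp add: B_mult[OF vk bl1[OF tg]] B_mult[OF vk slice1[OF tg]])
  have sw: "\<And>p. Bk (\<lambda>r. Bk (\<lambda>u. F p r u) (snd p)) y = Bk (\<lambda>u. Bk (\<lambda>r. F p r u) y) (snd p)"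
    by (rule B_swap[OF vk])
  have s3: "Bk (\<lambda>r. F p r u) y = K (fst p, u)" for p u
  proof -
    have "Bk (\<lambda>r. F p r u) y = C1 (\<lambda>t. \<gamma> (fst p * fst t, fst u * fst (snd t), snd u * snd (snd t))) y"
      unfolding C1_def F_def by simp
    also have "\<dots> = C2 (\<lambda>t. \<gamma> (fst p * fst t, fst u * fst (snd t), snd u * snd (snd t))) y"
      using IHy tril_shift[OF tg] by blast
    also have "\<dots> = K (fst p, u)"
      unfolding C2_def K_def by simp
    finally show ?thesis .
  qed
  have "C1 \<gamma> (x * y) = Bk (\<lambda>p. Bk (\<lambda>u. K (fst p, u)) (snd p)) x"
    by (simp only: s1 sw s3)
  also have "\<dots> = C1 K x"
    unfolding C1_def ..
  also have "\<dots> = C2 K x"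
    using IHx tril_K[OF tg] unfolding K_def by blast
  also have "\<dots> = Bk (\<lambda>p. Bk (\<lambda>w. Bk (\<lambda>r. G p r w) y) (fst p)) x"
    unfolding C2_def K_def G_def by simp
  also have "\<dots> = Bk (\<lambda>p. Bk (\<lambda>r. Bk (\<lambda>w. G p r w) (fst p)) y) x"
    by (simp only: B_swap[OF vk, of "\<lambda>w r. G _ r w"])
  also have "\<dots> = C2 \<gamma> (x * y)"
    unfolding C2_def G_def by (simp add: B_mult[OF vk bl2[OF tg]] B_mult[OF vk slice3[OF tg]])
  finally show ?thesis .
qed

lemma coassoc_scalar: "h \<in> gen \<Longrightarrow> \<forall>\<gamma>. tril sU \<gamma> \<longrightarrow> C1 \<gamma> h = C2 \<gamma> h"
proof (induct rule: gen.induct)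
  case gen_one then show ?case using C_one by blast
next
  case gen_q then show ?case using C_q by blast
next
  case (gen_i a) then show ?case using C_i by blast
next
  case (gen_add x y) then show ?case using C_add by simp
next
  case (gen_smult x c) then show ?case using C_smult by simp
next
  case (gen_mult x y) then show ?case using C_mult by blast
qed

end

lemma sep3:
  fixes X :: "'u::ab_group_add \<times> 'u \<times> 'u \<Rightarrow> 'k::field" and sU :: "'k \<Rightarrow> 'u \<Rightarrow> 'u"
  assumes fX: "finite (fsupp X)" and H: "\<forall>\<gamma>. tril sU \<gamma> \<longrightarrow> pairG (*) X \<gamma> = 0"
  shows "X \<in> tensor_rel3 sU"
proof (rule ccontr)
  assume nX: "X \<notin> tensor_rel3 sU"
  interpret V: vector_space "fscale :: 'k \<Rightarrow> ('u \<times> 'u \<times> 'u \<Rightarrow> 'k) \<Rightarrow> _" by (rule vs_fscale)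
  interpret P: vector_space_pair "fscale :: 'k \<Rightarrow> ('u \<times> 'u \<times> 'u \<Rightarrow> 'k) \<Rightarrow> _" "(*) :: 'k \<Rightarrow> 'k \<Rightarrow> 'k"
    by unfold_locales (auto simp: fscale_def algebra_simps)
  have sub3: "V.subspace (tensor_rel3 sU)" unfolding tensor_rel3_def by (rule V.subspace_span)
  obtain Bs where Bs: "Bs \<subseteq> tensor_rel3 sU" "V.independent Bs" "tensor_rel3 sU \<subseteq> V.span Bs"
    by (rule V.maximal_independent_subset)
  have spB: "V.span Bs \<subseteq> tensor_rel3 sU" by (rule V.span_minimal[OF Bs(1) sub3])
  have XnB: "X \<notin> V.span Bs" using nX spB by blast
  have ind: "V.independent (insert X Bs)" by (rule V.independent_insertI[OF XnB Bs(2)])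
  obtain \<phi> where lin: "Vector_Spaces.linear fscale (*) \<phi>" and \<phi>b: "\<forall>b\<in>insert X Bs. \<phi> b = (if b = X then 1 else 0)"
    using P.linear_independent_extend[OF ind, of "\<lambda>b. if b = X then 1 else 0"] by blast
  have \<phi>add: "\<phi> (x + y) = \<phi> x + \<phi> y" and \<phi>sc: "\<phi> (fscale c x) = c * \<phi> x" for x y c
    using lin unfolding Vector_Spaces.linear_iff by auto
  have \<phi>diff: "\<phi> (x - y) = \<phi> x - \<phi> y" for x y
    using \<phi>add[of "x - y" y] by (simp add: eq_diff_eq)
  have \<phi>X: "\<phi> X = 1" using \<phi>b by simp
  have \<phi>0B: "\<phi> b = 0" if "b \<in> Bs" for b
    using \<phi>b that XnB V.span_base[OF that] by auto
  have \<phi>0: "\<phi> r = 0" if "r \<in> tensor_rel3 sU" for r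
  proof -
    interpret L: Vector_Spaces.linear fscale "(*) :: 'k \<Rightarrow> 'k \<Rightarrow> 'k" \<phi> by (rule lin)
    show ?thesis using L.eq_0_on_span[of Bs r] \<phi>0B that Bs(3) by blast
  qed
  have g1: "\<phi> (tens3 (a + a') b d - tens3 a b d - tens3 a' b d) = 0" for a a' b d unfolding tensor_rel3_def by (rule \<phi>0[unfolded tensor_rel3_def], rule V.span_base, rule UnI1, rule UnI1, rule UnI1, rule UnI1, rule UnI1, rule CollectI) blast
  have g2: "\<phi> (tens3 a (b + b') d - tens3 a b d - tens3 a b' d) = 0" for a b b' d unfolding tensor_rel3_def by (rule \<phi>0[unfolded tensor_rel3_def], rule V.span_base, rule UnI1, rule UnI1, rule UnI1, rule UnI1, rule UnI2, rule CollectI) blast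
  have g3: "\<phi> (tens3 a b (d + d') - tens3 a b d - tens3 a b d') = 0" for a b d d' unfolding tensor_rel3_def by (rule \<phi>0[unfolded tensor_rel3_def], rule V.span_base, rule UnI1, rule UnI1, rule UnI1, rule UnI2, rule CollectI) blast
  have g4: "\<phi> (tens3 (sU c a) b d - fscale c (tens3 a b d)) = 0" for a b d c unfolding tensor_rel3_def by (rule \<phi>0[unfolded tensor_rel3_def], rule V.span_base, rule UnI1, rule UnI1, rule UnI2, rule CollectI) blast
  have g5: "\<phi> (tens3 a (sU c b) d - fscale c (tens3 a b d)) = 0" for a b d c unfolding tensor_rel3_def by (rule \<phi>0[unfolded tensor_rel3_def], rule V.span_base, rule UnI1, rule UnI2, rule CollectI) blast
  have g6: "\<phi> (tens3 a b (sU c d) - fscale c (tens3 a b d)) = 0" for a b d c unfolding tensor_rel3_def by (rule \<phi>0[unfolded tensor_rel3_def], rule V.span_base, rule UnI2, rule CollectI) blast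
  define \<gamma> where "\<gamma> = (\<lambda>t. \<phi> (tens3 (fst t) (fst (snd t)) (snd (snd t))))"
  have tg: "tril sU \<gamma>"
    unfolding tril_def \<gamma>_def
  proof (intro conjI allI)
    fix a a' b c t
    show "\<phi> (tens3 (fst (a + a', b, c)) (fst (snd (a + a', b, c))) (snd (snd (a + a', b, c)))) =
       \<phi> (tens3 (fst (a, b, c)) (fst (snd (a, b, c))) (snd (snd (a, b, c)))) +
       \<phi> (tens3 (fst (a', b, c)) (fst (snd (a', b, c))) (snd (snd (a', b, c))))"
      using g1[of a a' b c] by (simp only: \<phi>diff \<phi>add diff_diff_eq right_minus_eq prod.sel)
    show "\<phi> (tens3 (fst (a, b + a', c)) (fst (snd (a, b + a', c))) (snd (snd (a, b + a', c)))) =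
       \<phi> (tens3 (fst (a, b, c)) (fst (snd (a, b, c))) (snd (snd (a, b, c)))) +
       \<phi> (tens3 (fst (a, a', c)) (fst (snd (a, a', c))) (snd (snd (a, a', c))))"
      using g2[of a b a' c] by (simp only: \<phi>diff \<phi>add diff_diff_eq right_minus_eq prod.sel)
    show "\<phi> (tens3 (fst (a, b, c + a')) (fst (snd (a, b, c + a'))) (snd (snd (a, b, c + a')))) =
       \<phi> (tens3 (fst (a, b, c)) (fst (snd (a, b, c))) (snd (snd (a, b, c)))) +
       \<phi> (tens3 (fst (a, b, a')) (fst (snd (a, b, a'))) (snd (snd (a, b, a'))))"
      using g3[of a b c a'] by (simp only: \<phi>diff \<phi>add diff_diff_eq right_minus_eq prod.sel)
  next
    fix t a b c
    show "\<phi> (tens3 (fst (sU t a, b, c)) (fst (snd (sU t a, b, c))) (snd (snd (sU t a, b, c)))) =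
       t * \<phi> (tens3 (fst (a, b, c)) (fst (snd (a, b, c))) (snd (snd (a, b, c))))"
      using g4[of t a b c] by (simp only: \<phi>diff \<phi>sc diff_diff_eq right_minus_eq prod.sel)
    show "\<phi> (tens3 (fst (a, sU t b, c)) (fst (snd (a, sU t b, c))) (snd (snd (a, sU t b, c)))) =
       t * \<phi> (tens3 (fst (a, b, c)) (fst (snd (a, b, c))) (snd (snd (a, b, c))))"
      using g5[of a t b c] by (simp only: \<phi>diff \<phi>sc diff_diff_eq right_minus_eq prod.sel)
    show "\<phi> (tens3 (fst (a, b, sU t c)) (fst (snd (a, b, sU t c))) (snd (snd (a, b, sU t c)))) =
       t * \<phi> (tens3 (fst (a, b, c)) (fst (snd (a, b, c))) (snd (snd (a, b, c))))"
      using g6[of a b t c] by (simp only: \<phi>diff \<phi>sc diff_diff_eq right_minus_eq prod.sel)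
  qed
  have t3: "tens3 (fst t) (fst (snd t)) (snd (snd t)) = (\<lambda>s. if s = t then 1 else 0)" for t :: "'u \<times> 'u \<times> 'u"
    unfolding tens3_def by (rule ext) (simp only: prod.collapse)
  have ind_A: "finite A \<Longrightarrow> \<phi> (\<lambda>s. if s \<in> A then X s else 0) = (\<Sum>t\<in>A. X t * \<gamma> t)" for A
  proof (induct A rule: finite_induct)
    case empty
    have "\<phi> (fscale 0 X) = 0" by (simp only: \<phi>sc mult_zero_left)
    moreover have "fscale 0 X = (\<lambda>s. if s \<in> {} then X s else 0)" by (simp add: fscale_def)
    ultimately show ?case by (simp only: sum.empty)
  next
    case (insert a A)
    have "(\<lambda>s. if s \<in> insert a A then X s else 0) =
        (\<lambda>s. if s \<in> A then X s else 0) + fscale (X a) (tens3 (fst a) (fst (snd a)) (snd (snd a)))"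
      using insert(2) unfolding t3 by (auto simp: fscale_def fun_eq_iff)
    then show ?case using insert by (simp add: \<phi>add \<phi>sc \<gamma>_def)
  qed
  have "(\<lambda>s. if s \<in> fsupp X then X s else 0) = X" by (auto simp: fsupp_def fun_eq_iff)
  then have "\<phi> X = pairG (*) X \<gamma>" using ind_A[OF fX] by (simp add: pairG_def)
  also have "\<dots> = 0" using H tg by blast
  finally show False using \<phi>X by simp
qed

definition Lf :: "'u \<Rightarrow> ('u \<times> 'u \<Rightarrow> 'k) \<Rightarrow> ('u \<times> 'u \<times> 'u \<Rightarrow> 'k::field)" where
  "Lf a G = (\<lambda>t. if fst t = a then G (snd t) else 0)"
definition Rf :: "'u \<Rightarrow> ('u \<times> 'u \<Rightarrow> 'k) \<Rightarrow> ('u \<times> 'u \<times> 'u \<Rightarrow> 'k::field)" where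
  "Rf b G = (\<lambda>t. if snd (snd t) = b then G (fst t, fst (snd t)) else 0)"

lemma fsupp_Lf: "fsupp (Lf a G) = Pair a ` fsupp G"
  by (auto simp: fsupp_def Lf_def image_iff)
lemma fsupp_Rf: "fsupp (Rf b G) = (\<lambda>r. (fst r, snd r, b)) ` fsupp G"
  by (auto simp: fsupp_def Rf_def image_iff)

lemma pairG_Lf: "pairG sW (Lf a G) \<gamma> = pairG sW G (\<lambda>r. \<gamma> (a, r))"
  unfolding pairG_def fsupp_Lf by (subst sum.reindex) (auto simp: inj_on_def Lf_def)
lemma pairG_Rf: "pairG sW (Rf b G) \<gamma> = pairG sW G (\<lambda>r. \<gamma> (fst r, snd r, b))"
  unfolding pairG_def fsupp_Rf by (subst sum.reindex) (auto simp: inj_on_def Rf_def)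

lemma fin_Lf: "finite (fsupp G) \<Longrightarrow> finite (fsupp (Lf a G))" by (simp add: fsupp_Lf)
lemma fin_Rf: "finite (fsupp G) \<Longrightarrow> finite (fsupp (Rf a G))" by (simp add: fsupp_Rf)

lemma pairG_sumfun:
  fixes \<Phi> :: "'a \<Rightarrow> 'p \<Rightarrow> 'k::field"
  assumes "finite A" "\<And>p. p \<in> A \<Longrightarrow> finite (fsupp (\<Phi> p))"
  shows "finite (fsupp (\<lambda>t. \<Sum>p\<in>A. \<Phi> p t)) \<and>
         pairG (*) (\<lambda>t. \<Sum>p\<in>A. \<Phi> p t) \<gamma> = (\<Sum>p\<in>A. pairG (*) (\<Phi> p) \<gamma>)"
  using assms
proof (induct A rule: finite_induct)
  case empty then show ?case by (simp add: pairG_def fsupp_def)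
next
  case (insert a A)
  have e: "(\<lambda>t. \<Sum>p\<in>insert a A. \<Phi> p t) = \<Phi> a + (\<lambda>t. \<Sum>p\<in>A. \<Phi> p t)"
    using insert(1,2) by (simp add: fun_eq_iff)
  show ?case unfolding e using insert
    by (simp add: pairG_add[OF vs_mult])
qed

context setting
begin

lemma id_tensor_eq: "id_tensor D F = (\<lambda>t. \<Sum>p\<in>fsupp F. fscale (F p) (Lf (fst p) (D (snd p))) t)"
  unfolding id_tensor_def Lf_def fscale_def
  by (rule ext) (simp add: case_prod_unfold if_distrib cong: if_cong)

lemma tensor_id_eq: "tensor_id D F = (\<lambda>t. \<Sum>p\<in>fsupp F. fscale (F p) (Rf (snd p) (D (fst p))) t)"
  unfolding tensor_id_def Rf_def fscale_def
  by (rule ext) (simp add: case_prod_unfold if_distrib cong: if_cong)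

lemma pair_id_tensor: "finite (fsupp (id_tensor D (D h))) \<and> pairG (*) (id_tensor D (D h)) \<gamma> = C1 \<gamma> h"
proof -
  have "finite (fsupp (id_tensor D (D h))) \<and> pairG (*) (id_tensor D (D h)) \<gamma> =
     (\<Sum>p\<in>fsupp (D h). pairG (*) (fscale (D h p) (Lf (fst p) (D (snd p)))) \<gamma>)"
    unfolding id_tensor_eq by (rule pairG_sumfun) (simp_all add: fin_Lf)
  moreover have "(\<Sum>p\<in>fsupp (D h). pairG (*) (fscale (D h p) (Lf (fst p) (D (snd p)))) \<gamma>) = C1 \<gamma> h"
    unfolding C1_def B_def by (simp add: pairG_fscale[OF vs_mult] fin_Lf pairG_Lf) (simp add: pairG_def)
  ultimately show ?thesis by simp
qed

lemma pair_tensor_id: "finite (fsupp (tensor_id D (D h))) \<and> pairG (*) (tensor_id D (D h)) \<gamma> = C2 \<gamma> h"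
proof -
  have "finite (fsupp (tensor_id D (D h))) \<and> pairG (*) (tensor_id D (D h)) \<gamma> =
     (\<Sum>p\<in>fsupp (D h). pairG (*) (fscale (D h p) (Rf (snd p) (D (fst p)))) \<gamma>)"
    unfolding tensor_id_eq by (rule pairG_sumfun) (simp_all add: fin_Rf)
  moreover have "(\<Sum>p\<in>fsupp (D h). pairG (*) (fscale (D h p) (Rf (snd p) (D (fst p)))) \<gamma>) = C2 \<gamma> h"
    unfolding C2_def B_def by (simp add: pairG_fscale[OF vs_mult] fin_Rf pairG_Rf) (simp add: pairG_def)
  ultimately show ?thesis by simp
qed

lemma coassoc: "h \<in> gen \<Longrightarrow> teq3 sU (id_tensor D (D h)) (tensor_id D (D h))"
  unfolding teq3_def
proof (rule sep3)
  assume h: "h \<in> gen"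
  show "finite (fsupp (id_tensor D (D h) - tensor_id D (D h)))"
    using pair_id_tensor pair_tensor_id by simp
  show "\<forall>\<gamma>. tril sU \<gamma> \<longrightarrow> pairG (*) (id_tensor D (D h) - tensor_id D (D h)) \<gamma> = 0"
    using pair_id_tensor pair_tensor_id coassoc_scalar[OF h]
    by (simp add: pairG_diff[OF vs_mult])
qed

end

locale setting2 = setting sU q D k i
  for sU :: "'k::field \<Rightarrow> 'u::ring_1 \<Rightarrow> 'u" and q D k and i :: "'l::ab_group_add \<Rightarrow> 'u" +
  fixes e :: "'u \<Rightarrow> 'k"
  assumes e_add: "\<forall>x y. e (x + y) = e x + e y"
    and e_smult: "\<forall>c x. e (sU c x) = c * e x"
    and e_mult: "\<forall>x y. e (x * y) = e x * e y"
    and e_one: "e 1 = 1"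
    and e_q: "e q = 1"
    and e_i: "\<forall>a. e (i a) = 0"
    and kn0: "k \<noteq> 0"
begin

interpretation U: vector_space sU by (rule vsU)

lemma e_diff: "e (x - y) = e x - e y"
  using e_add[rule_format, of "x - y" y] by (simp add: eq_diff_eq)
lemma e_neg: "e (- x) = - e x"
  using e_diff[of 0 x] e_diff[of 0 0] by simp

lemma B_multiplicative:
  assumes bl: "bilin sU sU \<beta>" and m: "\<And>a b c d. \<beta> (a * c, b * d) = \<beta> (a, b) * \<beta> (c, d)"
  shows "B sU \<beta> (x * y) = B sU \<beta> x * B sU \<beta> y"
proof -
  have "B sU \<beta> (x * y) = B sU (\<lambda>p. B sU (\<lambda>r. \<beta> p * \<beta> r) y) x"
    by (simp add: B_mult[OF vsU bl] m)
  also have "\<dots> = B sU (\<lambda>p. \<beta> p * B sU \<beta> y) x"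
    unfolding B_def by (simp add: pairG_mult_left[OF kalg])
  also have "\<dots> = B sU \<beta> x * B sU \<beta> y"
    unfolding B_def by (simp add: pairG_mult_right[OF kalg])
  finally show ?thesis .
qed

definition "sig a = a + q * a - a * q"

lemma sig_mult: "sig (x * y) = sig x * sig y"
proof -
  have R1: "q * (a * q) = q * a" for a using qxq[of a] by (simp add: mult.assoc)
  have R2: "q * (a * (q * b)) = q * (a * b)" for a b
    using qxq[of a] by (metis mult.assoc)
  have R3: "q * (q * b) = q * b" for b by (simp add: mult.assoc[symmetric] qq)
  have R5: "q * (a * (b * q)) = q * (a * b)" for a b using R1[of "a * b"] by (simp add: mult.assoc)
  have R4: "a * (q * (q * b)) = a * (q * b)" for a b by (simp add: R3)
  show ?thesis unfolding sig_def
    by (simp add: algebra_simps R1 R2 R3 R4 R5)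
qed

lemma sig_add: "sig (x + y) = sig x + sig y" unfolding sig_def by (simp add: algebra_simps)
lemma sig_smult: "sig (sU c x) = sU c (sig x)"
  unfolding sig_def by (simp add: U.scale_right_distrib U.scale_right_diff_distrib sm_l[symmetric] sm_r[symmetric])

definition "be = (\<lambda>p. sU (e (fst p)) (snd p))"
definition "be' = (\<lambda>p. sU (e (snd p)) (fst p))"

lemma bl_be: "bilin sU sU be"
  unfolding bilin_def be_def
  by (simp add: e_add e_smult U.scale_left_distrib U.scale_right_distrib mult.commute)
lemma bl_be': "bilin sU sU be'"
  unfolding bilin_def be'_def
  by (simp add: e_add e_smult U.scale_left_distrib U.scale_right_distrib mult.commute)

lemma be_m: "be (a * c, b * d) = be (a, b) * be (c, d)"
  unfolding be_def by (simp add: e_mult sm_l[symmetric] sm_r[symmetric] mult.commute)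
lemma be'_m: "be' (a * c, b * d) = be' (a, b) * be' (c, d)"
  unfolding be'_def by (simp add: e_mult sm_l[symmetric] sm_r[symmetric] mult.commute)

lemma eP: "e (q * i a) = 0" by (simp add: e_mult e_i)
lemma ey: "e (i a + sU k (q * i a) - i a * q) = 0"
  by (simp add: e_diff e_add e_smult e_mult e_i)

lemma yP: "i a + sU k (q * i a) - i a * q + sU (1 - k) (q * i a) = sig (i a)"
  unfolding sig_def by (simp add: U.scale_left_diff_distrib algebra_simps)

lemma counit1: "h \<in> gen \<Longrightarrow> B sU be h = sig h"
proof (induct rule: gen.induct)
  case gen_one then show ?case by (simp add: B_one[OF vsU bl_be]) (simp add: be_def e_one sig_def)
next
  case gen_q then show ?case by (simp add: B_q[OF vsU bl_be]) (simp add: be_def e_q sig_def qq)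
next
  case (gen_i a) then show ?case
    by (simp add: B_i[OF vsU bl_be]) (simp add: be_def e_one e_q eP ey yP[symmetric])
next
  case (gen_add x y) then show ?case by (simp add: B_add[OF vsU bl_be] sig_add)
next
  case (gen_smult x c) then show ?case by (simp add: B_smult[OF vsU bl_be] sig_smult)
next
  case (gen_mult x y) then show ?case by (simp add: B_multiplicative[OF bl_be be_m] sig_mult)
qed

lemma counit2: "h \<in> gen \<Longrightarrow> B sU be' h = sig h"
proof (induct rule: gen.induct)
  case gen_one then show ?case by (simp add: B_one[OF vsU bl_be']) (simp add: be'_def e_one sig_def)
next
  case gen_q then show ?case by (simp add: B_q[OF vsU bl_be']) (simp add: be'_def e_q sig_def qq)
next
  case (gen_i a) then show ?case
    by (simp add: B_i[OF vsU bl_be']) (simp add: be'_def e_one e_q eP ey yP[symmetric])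
next
  case (gen_add x y) then show ?case by (simp add: B_add[OF vsU bl_be'] sig_add)
next
  case (gen_smult x c) then show ?case by (simp add: B_smult[OF vsU bl_be'] sig_smult)
next
  case (gen_mult x y) then show ?case by (simp add: B_multiplicative[OF bl_be' be'_m] sig_mult)
qed

lemma eps_tensor_id_B: "eps_tensor_id sU e F = pairG sU F be"
  unfolding eps_tensor_id_def pairG_def be_def by (simp add: case_prod_unfold mult.commute)
lemma id_tensor_eps_B: "id_tensor_eps sU e F = pairG sU F be'"
  unfolding id_tensor_eps_def pairG_def be'_def by (simp add: case_prod_unfold mult.commute)

end

locale setting3 = setting2 sU q D k i e
  for sU :: "'k::field \<Rightarrow> 'u::ring_1 \<Rightarrow> 'u" and q D k and i :: "'l::ab_group_add \<Rightarrow> 'u" and e +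
  fixes S :: "'u \<Rightarrow> 'u"
  assumes S: "invariant_antihom sU q S"
    and S_i: "\<forall>a. S (i a) = - sU (1 / k) (i a) - sU k (q * i a) + sU (1 / k) (i a * q)"
begin

interpretation U: vector_space sU by (rule vsU)

lemma S_add: "S (x + y) = S x + S y" using S by (simp add: invariant_antihom_def)
lemma S_smult: "S (sU c x) = sU c (S x)" using S by (simp add: invariant_antihom_def)
lemma S_mult: "S (a * b) = S b * S a" using S by (simp add: invariant_antihom_def)
lemma S_one: "S 1 = 1" using S by (simp add: invariant_antihom_def)
lemma S_q: "S q = 1 - q" using S by (simp add: invariant_antihom_def)
lemma S_neg: "S (- x) = - S x" using S_smult[of "-1" x] by simp
lemma S_diff: "S (x - y) = S x - S y" using S_add[of x "- y"] S_neg[of y] by simp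

definition "bh1 = (\<lambda>p. S (fst p) * snd p)"
definition "bh2 = (\<lambda>p. fst p * S (snd p))"

lemma bl_bh1: "bilin sU sU bh1"
  unfolding bilin_def bh1_def
  by (simp add: S_add S_smult distrib_left distrib_right sm_l[symmetric] sm_r[symmetric])
lemma bl_bh2: "bilin sU sU bh2"
  unfolding bilin_def bh2_def
  by (simp add: S_add S_smult distrib_left distrib_right sm_l[symmetric] sm_r[symmetric])

lemma m_tensor1: "m_tensor sU S id F = pairG sU F bh1"
  unfolding m_tensor_def pairG_def bh1_def by (simp add: case_prod_unfold)
lemma m_tensor2: "m_tensor sU id S F = pairG sU F bh2"
  unfolding m_tensor_def pairG_def bh2_def by (simp add: case_prod_unfold)


lemma qaq: "q * (a * q) = q * a" by (simp add: mult.assoc[symmetric] qxq)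

lemma qqa: "q * (q * a) = q * a" by (simp add: mult.assoc[symmetric] qq)


lemma Sx_q: "S (i a) * q = - sU k (q * i a)"
  by (simp add: S_i algebra_simps sm_l[symmetric] qq qxq qaq)

lemma q_Sx: "q * S (i a) = - sU k (q * i a)"
  by (simp add: S_i algebra_simps sm_r[symmetric] qq qaq qqa)


lemma S_y: "S (i a + sU k (q * i a) - i a * q) = - (i a + sU k (q * i a) - i a * q)"
proof -
  let ?x = "i a" let ?P = "q * i a"
  have "S (?x + sU k ?P - ?x * q) = S ?x + sU k (S ?x * (1 - q)) - (1 - q) * S ?x"
    by (simp add: S_diff S_add S_smult S_mult S_q)
  also have "\<dots> = sU k (S ?x) - sU k (S ?x * q) + q * S ?x"
    by (simp add: algebra_simps U.scale_right_diff_distrib)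
  also have "\<dots> = sU k (S ?x) + sU (k * k) ?P - sU k ?P"
    by (simp add: Sx_q q_Sx)
  also have "sU k (S ?x) = - ?x - sU (k * k) ?P + ?x * q"
    using kn0 by (simp add: S_i U.scale_right_diff_distrib U.scale_right_distrib)
  finally show ?thesis by (simp add: algebra_simps)
qed


lemma eSx: "e (S (i a)) = 0"
  by (simp add: S_i e_add e_diff e_neg e_smult e_mult e_i)


lemma SP_q: "S (q * i a) * q = 0"
  by (simp add: S_mult S_q algebra_simps qq)

lemma qSP: "q * S (q * i a) = 0"
proof -
  have "q * S (q * i a) = q * S (i a) * (1 - q)" by (simp add: S_mult S_q mult.assoc)
  also have "\<dots> = 0" by (simp add: q_Sx algebra_simps sm_l[symmetric] qxq qaq)
  finally show ?thesis .
qed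

lemma Sq_P: "S q * (q * i a) = 0" by (simp add: S_q algebra_simps mult.assoc[symmetric] qq)

lemma P_Sq: "q * i a * S q = 0" by (simp add: S_q algebra_simps qxq qaq)


lemma hopf1: "h \<in> gen \<Longrightarrow> B sU bh1 h = sU (e (S h)) 1"
proof (induct rule: gen.induct)
  case gen_one then show ?case by (simp add: B_one[OF vsU bl_bh1]) (simp add: bh1_def S_one e_one)
next
  case gen_q then show ?case by (simp add: B_q[OF vsU bl_bh1]) (simp add: bh1_def S_q e_diff e_one e_q algebra_simps qq)
next
  case (gen_i a) then show ?case
    by (simp add: B_i[OF vsU bl_bh1]) (simp add: bh1_def S_one S_y SP_q Sq_P eSx)
next
  case (gen_add x y) then show ?case
    by (simp add: B_add[OF vsU bl_bh1] S_add e_add U.scale_left_distrib)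
next
  case (gen_smult x c) then show ?case by (simp add: B_smult[OF vsU bl_bh1] S_smult e_smult)
next
  case (gen_mult x y)
  have "B sU bh1 (x * y) = B sU (\<lambda>p. B sU (\<lambda>r. S (fst r) * bh1 p * snd r) y) x"
    by (simp add: B_mult[OF vsU bl_bh1]) (simp add: bh1_def S_mult mult.assoc)
  also have "\<dots> = B sU (\<lambda>r. B sU (\<lambda>p. S (fst r) * bh1 p * snd r) x) y"
    by (rule B_swap[OF vsU])
  also have "\<dots> = B sU (\<lambda>r. S (fst r) * B sU bh1 x * snd r) y"
    unfolding B_def by (simp add: pairG_mult_left[OF kalg] pairG_mult_right[OF kalg])
  also have "\<dots> = B sU (\<lambda>r. sU (e (S x)) (bh1 r)) y"
    using gen_mult by (simp add: bh1_def sm_l[symmetric] sm_r[symmetric])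
  also have "\<dots> = sU (e (S (x * y))) 1"
    using gen_mult by (simp add: B_beta_scale[OF vsU] S_mult e_mult mult.commute)
  finally show ?case .
qed


lemma hopf2: "h \<in> gen \<Longrightarrow> B sU bh2 h = sU (e (S h)) 1"
proof (induct rule: gen.induct)
  case gen_one then show ?case by (simp add: B_one[OF vsU bl_bh2]) (simp add: bh2_def S_one e_one)
next
  case gen_q then show ?case by (simp add: B_q[OF vsU bl_bh2]) (simp add: bh2_def S_q e_diff e_one e_q algebra_simps qq)
next
  case (gen_i a) then show ?case
    by (simp add: B_i[OF vsU bl_bh2]) (simp add: bh2_def S_one S_y qSP P_Sq eSx)
next
  case (gen_add x y) then show ?case
    by (simp add: B_add[OF vsU bl_bh2] S_add e_add U.scale_left_distrib)
next
  case (gen_smult x c) then show ?case by (simp add: B_smult[OF vsU bl_bh2] S_smult e_smult)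
next
  case (gen_mult x y)
  have "B sU bh2 (x * y) = B sU (\<lambda>p. B sU (\<lambda>r. fst p * bh2 r * S (snd p)) y) x"
    by (simp add: B_mult[OF vsU bl_bh2]) (simp add: bh2_def S_mult mult.assoc)
  also have "\<dots> = B sU (\<lambda>p. fst p * B sU bh2 y * S (snd p)) x"
    unfolding B_def by (simp add: pairG_mult_left[OF kalg] pairG_mult_right[OF kalg])
  also have "\<dots> = B sU (\<lambda>p. sU (e (S y)) (bh2 p)) x"
    using gen_mult by (simp add: bh2_def sm_l[symmetric] sm_r[symmetric])
  also have "\<dots> = sU (e (S (x * y))) 1"
    using gen_mult by (simp add: B_beta_scale[OF vsU] S_mult e_mult)
  finally show ?case .
qed


end

context setting
begin

interpretation U: vector_space sU by (rule vsU)

lemma qaq0: "q * (a * q) = q * a" by (simp add: mult.assoc[symmetric] qxq)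

lemma gen_zero: "0 \<in> gen" using gen_smult[OF gen_one, of 0] by simp
lemma gen_neg: "x \<in> gen \<Longrightarrow> - x \<in> gen" using gen_smult[of x "-1"] by simp

lemma gen_all:
  fixes sL :: "'k \<Rightarrow> 'l \<Rightarrow> 'l" and br
  assumes U: "enveloping6 sL br k sU q i"
  shows "h \<in> gen"
proof -
  define AB :: "('k, 'u) ialg" where "AB = \<lparr>icar = gen, iadd = (+), izero = 0, ineg = uminus, ism = sU,
      imul = (*), ione = 1, iq = q\<rparr>"
  define AU :: "('k, 'u) ialg" where "AU = \<lparr>icar = UNIV, iadd = (+), izero = 0, ineg = uminus, ism = sU,
      imul = (*), ione = 1, iq = q\<rparr>"
  have lh: "lie_hom_U sL br k sU q i" using U by (simp add: enveloping6_def)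
  have univ: "\<forall>(A :: ('k, 'u) ialg) f. is_invariant_ialg A \<and> lie_hom_ialg sL br k A f \<longrightarrow>
        (\<exists>!\<phi>. inv_alg_hom_to sU q A \<phi> \<and> (\<forall>x. \<phi> (i x) = f x))"
    using U by (simp add: enveloping6_def)
  have ax: "is_invariant_ialg A" if "A = \<lparr>icar = C, iadd = (+), izero = 0, ineg = uminus, ism = sU,
      imul = (*), ione = 1, iq = q\<rparr>" and C: "0 \<in> C" "1 \<in> C" "q \<in> C"
      "\<And>x y. x \<in> C \<Longrightarrow> y \<in> C \<Longrightarrow> x + y \<in> C" "\<And>x y. x \<in> C \<Longrightarrow> y \<in> C \<Longrightarrow> x * y \<in> C"
      "\<And>x. x \<in> C \<Longrightarrow> - x \<in> C" "\<And>x c. x \<in> C \<Longrightarrow> sU c x \<in> C" for A C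
    unfolding is_invariant_ialg_def that(1)
    by (simp add: C algebra_simps U.scale_right_distrib U.scale_left_distrib qq qxq qaq0 sm_l[symmetric] sm_r[symmetric])
  have iAB: "is_invariant_ialg AB"
    by (rule ax[OF AB_def]) (auto intro: gen.intros gen_zero gen_neg)
  have iAU: "is_invariant_ialg AU"
    by (rule ax[OF AU_def]) auto
  have br6: "ibracket6 A k x y = bracket6 sU k q x y" if "iadd A = (+)" "ineg A = uminus" "imul A = (*)"
      "ism A = sU" "iq A = q" for A :: "('k, 'u) ialg" and x y
    unfolding ibracket6_def bracket6_def Let_def that by simp
  have lAB: "lie_hom_ialg sL br k AB i"
    using lh unfolding lie_hom_ialg_def lie_hom_U_def AB_def
    by (simp add: br6 gen_i)
  have lAU: "lie_hom_ialg sL br k AU i"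
    using lh unfolding lie_hom_ialg_def lie_hom_U_def AU_def
    by (simp add: br6)
  obtain \<phi> where \<phi>: "inv_alg_hom_to sU q AB \<phi>" "\<forall>x. \<phi> (i x) = i x"
    using univ iAB lAB by blast
  have \<phi>U: "inv_alg_hom_to sU q AU \<phi>" using \<phi>(1) unfolding inv_alg_hom_to_def AB_def AU_def by simp
  have idU: "inv_alg_hom_to sU q AU id" unfolding inv_alg_hom_to_def AU_def by simp
  have "\<exists>!\<psi>. inv_alg_hom_to sU q AU \<psi> \<and> (\<forall>x. \<psi> (i x) = i x)"
    using univ iAU lAU by blast
  then have "\<phi> = id" using \<phi>U \<phi>(2) idU by auto
  moreover have "\<phi> h \<in> gen" using \<phi>(1) unfolding inv_alg_hom_to_def AB_def by simp
  ultimately show ?thesis by simp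
qed

end

theorem proposition7p4:
  fixes sL :: "'k::field \<Rightarrow> 'l::ab_group_add \<Rightarrow> 'l"
    and br :: "'l \<Rightarrow> 'l \<Rightarrow> 'l"
    and k :: 'k
    and sU :: "'k \<Rightarrow> 'u::ring_1 \<Rightarrow> 'u"
    and q :: 'u
    and i :: "'l \<Rightarrow> 'u"
    and D :: "'u \<Rightarrow> ('u \<times> 'u \<Rightarrow> 'k)"
    and e :: "'u \<Rightarrow> 'k"
    and s S :: "'u \<Rightarrow> 'u"
  assumes L: "lie_algebra sL br"
    and k: "k \<noteq> 0"
    and U: "enveloping6 sL br k sU q i"
    \<comment> \<open>\<Delta>: the unital algebra homomorphism U \<rightarrow> U \<otimes> U with the given values\<close>
    and D_fin: "\<forall>h. finite (fsupp (D h))"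
    and D_add: "\<forall>x y. teq2 sU (D (x + y)) (D x + D y)"
    and D_smult: "\<forall>c x. teq2 sU (D (sU c x)) (fscale c (D x))"
    and D_mult: "\<forall>x y. teq2 sU (D (x * y)) (tmult2 (D x) (D y))"
    and D_one: "teq2 sU (D 1) (tens 1 1)"
    and D_q: "teq2 sU (D q) (tens q q)"
    and D_i: "\<forall>a. let x = i a; y = x + sU k (q * x) - x * q in
               teq2 sU (D x)
                 (tens y 1 + tens 1 y + fscale (1 - k) (tens (q * x) q)
                   + fscale (1 - k) (tens q (q * x)))"
    \<comment> \<open>\<epsilon>: the unital algebra homomorphism U \<rightarrow> k with the given values\<close>
    and e_add: "\<forall>x y. e (x + y) = e x + e y"
    and e_smult: "\<forall>c x. e (sU c x) = c * e x"
    and e_mult: "\<forall>x y. e (x * y) = e x * e y"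
    and e_one: "e 1 = 1"
    and e_q: "e q = 1"
    and e_i: "\<forall>a. e (i a) = 0"
    \<comment> \<open>\<sigma>\<close>
    and s_def: "\<forall>a. s a = a + q * a - a * q"
    \<comment> \<open>S: the invariant anti-homomorphism with the given values\<close>
    and S: "invariant_antihom sU q S"
    and S_i: "\<forall>a. S (i a) = - sU (1 / k) (i a) - sU k (q * i a) + sU (1 / k) (i a * q)"
  shows "bialgebra_sigma sU D e s \<and> hopf_like sU D e s S"
proof -
  have inv: "invariant_algebra sU q" using U by (simp add: enveloping6_def)
  interpret st: setting3 sU q D k i e S
    by unfold_locales (use inv D_fin D_add D_smult D_mult D_one D_q D_i e_add e_smult e_mult e_one e_q e_i k S S_i in auto)
  interpret U: vector_space sU by (rule st.vsU)
  have g: "h \<in> st.gen" for h by (rule st.gen_all[OF U])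
  have sE: "s = st.sig" using s_def by (simp add: fun_eq_iff st.sig_def)
  have bia: "bialgebra_sigma sU D e s"
    unfolding bialgebra_sigma_def
  proof (intro conjI)
    show "k_algebra sU" by (rule st.kalg)
    show "\<forall>x y. s (x + y) = s x + s y" by (simp add: sE st.sig_add)
    show "\<forall>c x. s (sU c x) = sU c (s x)" by (simp add: sE st.sig_smult)
    show "\<forall>h. teq3 sU (id_tensor D (D h)) (tensor_id D (D h))" using st.coassoc[OF g] by blast
    show "\<forall>h. eps_tensor_id sU e (D h) = s h"
      using st.counit1[OF g] by (simp add: st.eps_tensor_id_B st.B_def sE)
    show "\<forall>h. id_tensor_eps sU e (D h) = s h"
      using st.counit2[OF g] by (simp add: st.id_tensor_eps_B st.B_def sE)
  qed (use D_fin D_add D_smult D_mult D_one e_add e_smult e_mult e_one in auto)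
  have hop: "hopf_like sU D e s S"
    unfolding hopf_like_def
  proof (intro conjI)
    show "\<forall>h. m_tensor sU S id (D h) = sU (e (S h)) 1"
      using st.hopf1[OF g] by (simp add: st.m_tensor1 st.B_def)
    show "\<forall>h. m_tensor sU id S (D h) = sU (e (S h)) 1"
      using st.hopf2[OF g] by (simp add: st.m_tensor2 st.B_def)
  qed (use bia st.S_add st.S_smult in auto)
  show ?thesis using bia hop by simp
qed

end
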